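(* Let $\mathcal{D}$ be a generalised dyadic system, $\nu$ a Radon measure on $\mathbb{R}$ dyadically doubling relative to $\mathcal{D}$, and $\mu = g\,d\nu$ with $g\ge0$, $g\in L^2(\nu)$. Then $\mathcal{S}_{\mathcal{D},\nu}(\mu)(x) := \big(\sum_{I\in\mathcal{D}}\alpha^2_{\mu,\nu}(I)\chi_I(x)\big)^{1/2}$ is finite for $\mu$-almost every $x\in\mathbb{R}$.
   Context: A generalised dyadic system is a family $\mathcal{D}=\bigcup_{k\ge0}\mathcal{D}_k$ of half-open intervals such that each $\mathcal{D}_k$ is a partition of $\mathbb{R}$ into intervals of length $2^{-k}$, and each $I\in\mathcal{D}_k$ is the union of two intervals of $\mathcal{D}_{k+1}$. $\nu$ is dyadically doubling relative to $\mathcal{D}$ if $\nu(\hat I)\le C\nu(I)$ for every $I\in\mathcal{D}_k$, $k\ge1$, with $\hat I\in\mathcal{D}_{k-1}$ the interval containing $I$. Wasserstein distance: $\mathbb{W}_1(\nu_1,\nu_2) := \sup_\psi |\int\psi\,d\nu_1 - \int\psi\,d\nu_2|$ over all $1$-Lipschitz $\psi\colon\mathbb{R}\to\mathbb{R}$ supported on $[0,1]$. $T_I$ is the increasing affine map from $\overline I$ onto $[0,1]$, $\mu_I := T_{I\sharp}(\mu|_I)/\mu(I)$, $\nu_I := T_{I\sharp}(\nu|_I)/\nu(I)$ (zero if the mass vanishes), $\alpha_{\mu,\nu}(I) := \mathbb{W}_1(\mu_I,\nu_I)$. *)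

theory Defs
  imports "HOL-Analysis.Analysis"
begin

definition gen_dyadic_system :: "(nat \<Rightarrow> real set set) \<Rightarrow> bool" where
  "gen_dyadic_system D \<longleftrightarrow>
     (\<forall>k. (\<forall>I\<in>D k. \<exists>a. I = {a..<a + inverse (2 ^ k)})
        \<and> (\<forall>x::real. \<exists>!I. I \<in> D k \<and> x \<in> I)
        \<and> (\<forall>I\<in>D k. \<exists>J1\<in>D (Suc k). \<exists>J2\<in>D (Suc k). J1 \<noteq> J2 \<and> I = J1 \<union> J2))"

definition radon_measure :: "real measure \<Rightarrow> bool" where
  "radon_measure M \<longleftrightarrow> sets M = sets borel \<and> (\<forall>K. compact K \<longrightarrow> emeasure M K < \<infinity>)"

definition dyadically_doubling :: "(nat \<Rightarrow> real set set) \<Rightarrow> real measure \<Rightarrow> bool" where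
  "dyadically_doubling D M \<longleftrightarrow>
     (\<exists>C. \<forall>k\<ge>1. \<forall>I\<in>D k. \<forall>J\<in>D (k - 1). I \<subseteq> J \<longrightarrow> measure M J \<le> C * measure M I)"

definition W1 :: "real measure \<Rightarrow> real measure \<Rightarrow> real" where
  "W1 M1 M2 = Sup {\<bar>(\<integral>x. \<psi> x \<partial>M1) - (\<integral>x. \<psi> x \<partial>M2)\<bar> | \<psi>.
       1-lipschitz_on UNIV \<psi> \<and> (\<forall>x. x \<notin> {0..1} \<longrightarrow> \<psi> x = 0)}"

definition T_map :: "real set \<Rightarrow> real \<Rightarrow> real" where
  "T_map I x = (x - Inf I) / (Sup I - Inf I)"

definition blowup :: "real measure \<Rightarrow> real set \<Rightarrow> real measure" where
  "blowup M I = (if measure M I = 0 then null_measure borel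
     else scale_measure (ennreal (1 / measure M I))
            (distr (restrict_space M I) borel (T_map I)))"

definition alpha :: "real measure \<Rightarrow> real measure \<Rightarrow> real set \<Rightarrow> real" where
  "alpha \<mu> \<nu> I = W1 (blowup \<mu> I) (blowup \<nu> I)"

end

theory Submission
  imports Defs
begin


definition Iv :: "real \<Rightarrow> nat \<Rightarrow> int \<Rightarrow> real set" where
  "Iv a k j = {a + real_of_int j / 2^k ..< a + (real_of_int j + 1) / 2^k}"

definition Jx :: "real \<Rightarrow> nat \<Rightarrow> real \<Rightarrow> int" where
  "Jx a k x = \<lfloor>(x - a) * 2^k\<rfloor>"

lemma mem_Iv: "x \<in> Iv a k j \<longleftrightarrow> j = Jx a k x"
proof -
  have p: "(0::real) < 2^k" by simp
  have "x \<in> Iv a k j \<longleftrightarrow> real_of_int j \<le> (x - a) * 2^k \<and> (x - a) * 2^k < real_of_int j + 1"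
    unfolding Iv_def using p by (auto simp: field_simps)
  also have "\<dots> \<longleftrightarrow> j = Jx a k x" unfolding Jx_def by (auto intro!: floor_unique[symmetric])
  finally show ?thesis .
qed

lemma Iv_Jx: "x \<in> Iv a k (Jx a k x)" by (simp add: mem_Iv)

lemma Iv_disj: "j \<noteq> j' \<Longrightarrow> Iv a k j \<inter> Iv a k j' = {}"
  by (auto simp: mem_Iv)

lemma disjoint_family_Iv: "disjoint_family (Iv a k)"
  unfolding disjoint_family_on_def using Iv_disj by blast

lemma Jx_div: "Jx a (k + n) x div 2^n = Jx a k x"
proof -
  have "Jx a (k+n) x div 2^n = \<lfloor>(x - a) * 2^(k+n) / real_of_int (2^n)\<rfloor>"
    unfolding Jx_def by (subst floor_divide_real_eq_div) auto
  also have "(x - a) * 2^(k+n) / real_of_int (2^n) = (x - a) * 2^k"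
    by (simp add: power_add)
  finally show ?thesis unfolding Jx_def .
qed

lemma Iv_sub_iff: "x \<in> Iv a (k + n) q \<Longrightarrow> x \<in> Iv a k (q div 2^n)"
  by (simp add: mem_Iv Jx_div)

lemma Iv_sub: "q div 2^n = j \<Longrightarrow> Iv a (k + n) q \<subseteq> Iv a k j"
  using Iv_sub_iff by blast

lemma Iv_split: "Iv a k j = Iv a (Suc k) (2*j) \<union> Iv a (Suc k) (2*j+1)"
proof (rule set_eqI)
  fix x
  have "Jx a (k+1) x div 2^1 = Jx a k x" by (rule Jx_div)
  then show "x \<in> Iv a k j \<longleftrightarrow> x \<in> Iv a (Suc k) (2*j) \<union> Iv a (Suc k) (2*j+1)"
    by (auto simp: mem_Iv)
qed

lemma Iv_split_disj: "Iv a (Suc k) (2*j) \<inter> Iv a (Suc k) (2*j+1) = {}"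
  by (rule Iv_disj) simp

lemma Iv_borel[measurable]: "Iv a k j \<in> sets borel"
  unfolding Iv_def by simp

lemma Iv_bounded: "Iv a k j \<subseteq> {a + real_of_int j / 2^k .. a + (real_of_int j + 1) / 2^k}"
  unfolding Iv_def by auto

lemma Iv_nonempty: "Iv a k j \<noteq> {}"
  unfolding Iv_def by (auto simp: field_simps)

lemma Inf_Iv: "Inf (Iv a k j) = a + real_of_int j / 2^k"
  unfolding Iv_def by (rule cInf_atLeastLessThan) (simp add: field_simps)

lemma Sup_Iv: "Sup (Iv a k j) = a + (real_of_int j + 1) / 2^k"
  unfolding Iv_def by (rule cSup_atLeastLessThan) (simp add: field_simps)

lemma T_map_Iv: "T_map (Iv a k j) x = (x - a) * 2^k - real_of_int j"
  unfolding T_map_def Inf_Iv Sup_Iv by (simp add: field_simps)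

lemma UN_Iv: "(\<Union>j. Iv a k j) = UNIV"
  using Iv_Jx by blast

lemma measurable_Jx[measurable]: "Jx a k \<in> measurable borel (count_space UNIV)"
  unfolding Jx_def by measurable

lemma Iv_desc: "i < 2^n \<Longrightarrow> 0 \<le> i \<Longrightarrow> Iv a (k + n) (2^n * j + i) \<subseteq> Iv a k j"
  by (rule Iv_sub) simp

lemma gds_interval:
  assumes "gen_dyadic_system D" "I \<in> D k"
  obtains b where "I = {b..<b + inverse (2^k)}"
  using assms unfolding gen_dyadic_system_def by blast

lemma sets_eq_ivl: 
  fixes b c l :: real
  assumes "l > 0" "{b..<b+l} = {c..<c+l}" shows "b = c"
proof -
  have "b \<in> {c..<c+l}" using assms by auto
  moreover have "c \<in> {c..<c+l}" using assms by simp
  then have "c \<in> {b..<b+l}" using assms by simp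
  ultimately show ?thesis by auto
qed

lemma gds_sep:
  assumes G: "gen_dyadic_system D" and b: "{b..<b + inverse (2^k)} \<in> D k" and c: "{c..<c + inverse (2^k)} \<in> D k"
    and bc: "b < c" shows "b + inverse (2^k) \<le> c"
proof (rule ccontr)
  assume "\<not> ?thesis"
  then have "c \<in> {b..<b + inverse (2^k)}" "c \<in> {c..<c + inverse (2^k)}" using bc by auto
  with G b c have "{b..<b + inverse (2^k)} = {c..<c + inverse (2^k)}"
    unfolding gen_dyadic_system_def by metis
  then have "b = c" by (rule sets_eq_ivl[rotated]) simp
  with bc show False by simp
qed

lemma gds_right:
  assumes G: "gen_dyadic_system D" and b: "{b..<b + inverse (2^k)} \<in> D k"
  shows "{b + inverse (2^k)..<b + inverse (2^k) + inverse (2^k)} \<in> D k"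
proof -
  let ?l = "inverse (2^k) :: real"
  have l: "?l > 0" by simp
  obtain I where I: "I \<in> D k" "b + ?l \<in> I" using G unfolding gen_dyadic_system_def by metis
  obtain c where c: "I = {c..<c + ?l}" using gds_interval[OF G I(1)] by blast
  have c1: "c \<le> b + ?l" "b + ?l < c + ?l" using I(2) c by auto
  have "c = b + ?l"
  proof (rule ccontr)
    assume ne: "c \<noteq> b + ?l"
    show False
    proof (cases "b < c")
      case True
      have "b + ?l \<le> c" by (rule gds_sep[OF G b _ True]) (use I c in simp)
      with c1 ne show False by simp
    next
      case False
      show False
      proof (cases "c = b")
        case True with c1 show False by simp
      next
        case False
        with \<open>\<not> b < c\<close> have "c < b" by simp
        have "c + ?l \<le> b" by (rule gds_sep[OF G _ b \<open>c < b\<close>]) (use I c in simp)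
        with c1 show False by simp
      qed
    qed
  qed
  with I c show ?thesis by simp
qed

lemma gds_right_n:
  assumes G: "gen_dyadic_system D" and b: "{b..<b + inverse (2^k)} \<in> D k"
  shows "{b + real m * inverse (2^k)..<b + real m * inverse (2^k) + inverse (2^k)} \<in> D k"
proof (induction m)
  case 0 then show ?case using b by simp
next
  case (Suc m)
  from gds_right[OF G Suc] show ?case by (simp add: algebra_simps)
qed

lemma gds_all:
  assumes G: "gen_dyadic_system D" and b: "{b..<b + inverse (2^k)} \<in> D k" and I: "I \<in> D k"
  shows "\<exists>j::int. I = {b + real_of_int j * inverse (2^k)..<b + real_of_int j * inverse (2^k) + inverse (2^k)}"
proof -
  let ?l = "inverse (2^k) :: real"
  have l: "?l > 0" by simp
  obtain c where c: "I = {c..<c + ?l}" using gds_interval[OF G I] by blast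
  have key: "\<exists>m::nat. d + real m * ?l = e" if d: "{d..<d + ?l} \<in> D k" and e: "{e..<e + ?l} \<in> D k" and de: "d \<le> e" for d e
  proof -
    define m where "m = nat \<lfloor>(e - d) / ?l\<rfloor>"
    have "(e - d)/?l \<ge> 0" using de l by simp
    then have m1: "real m \<le> (e - d)/?l" "(e - d)/?l < real m + 1" unfolding m_def
      by (auto simp: of_nat_nat)
    have m2: "d + real m * ?l \<le> e" "e < d + real m * ?l + ?l" using m1 l
      by (auto simp: field_simps)
    have dm: "{d + real m * ?l..<d + real m * ?l + ?l} \<in> D k" by (rule gds_right_n[OF G d])
    show ?thesis
    proof (rule ccontr)
      assume "\<nexists>m. d + real m * ?l = e"
      then have "d + real m * ?l \<noteq> e" by blast
      then have "d + real m * ?l < e" using m2 by simp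
      from gds_sep[OF G dm e this] m2 show False by simp
    qed
  qed
  show ?thesis
  proof (cases "b \<le> c")
    case True
    obtain m where "b + real m * ?l = c" using key[OF b _ True] I c by blast
    then show ?thesis using c by (intro exI[of _ "int m"]) simp
  next
    case False
    obtain m where "c + real m * ?l = b" using key[of c b] I c b False by auto
    then have "c = b + real_of_int (- int m) * ?l" by simp
    then show ?thesis using c by (intro exI[of _ "- int m"]) simp
  qed
qed

lemma gds_base:
  assumes G: "gen_dyadic_system D" and b: "{b..<b + 1} \<in> D 0"
  shows "{b..<b + inverse (2^k)} \<in> D k"
proof (induction k)
  case 0 then show ?case using b by simp
next
  case (Suc k)
  let ?l = "inverse (2^k) :: real"
  let ?h = "inverse (2^Suc k) :: real"
  obtain J1 J2 where J: "J1 \<in> D (Suc k)" "J2 \<in> D (Suc k)" "J1 \<noteq> J2" "{b..<b + ?l} = J1 \<union> J2"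
    using G Suc unfolding gen_dyadic_system_def by meson
  obtain c1 where c1: "J1 = {c1..<c1 + ?h}" using gds_interval[OF G J(1)] by blast
  obtain c2 where c2: "J2 = {c2..<c2 + ?h}" using gds_interval[OF G J(2)] by blast
  have hp: "?h > 0" by simp
  have "b \<in> {b..<b + ?l}" by simp
  then have "b \<in> J1 \<union> J2" using J(4) by simp
  then have "J1 = {b..<b + ?h} \<or> J2 = {b..<b + ?h}"
  proof
    assume "b \<in> J1"
    moreover have "c1 \<in> J1" using c1 hp by simp
    then have "c1 \<ge> b" using J(4) by auto
    ultimately have "c1 = b" using c1 by auto
    then show ?thesis using c1 by simp
  next
    assume "b \<in> J2"
    moreover have "c2 \<in> J2" using c2 hp by simp
    then have "c2 \<ge> b" using J(4) by auto
    ultimately have "c2 = b" using c2 by auto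
    then show ?thesis using c2 by simp
  qed
  then show ?case using J by auto
qed

lemma gds_structure:
  assumes G: "gen_dyadic_system D"
  shows "\<exists>a. \<forall>k. \<forall>I\<in>D k. \<exists>j. I = Iv a k j"
proof -
  obtain I where I: "I \<in> D 0" "0 \<in> I" using G unfolding gen_dyadic_system_def by metis
  obtain b where b: "I = {b..<b + inverse (2^0)}" using gds_interval[OF G I(1)] by blast
  have b1: "{b..<b + 1} \<in> D 0" using I b by simp
  show ?thesis
  proof (rule exI[of _ b], intro allI ballI)
    fix k I assume "I \<in> D k"
    from gds_all[OF G gds_base[OF G b1] this] obtain j :: int where
      "I = {b + real_of_int j * inverse (2^k)..<b + real_of_int j * inverse (2^k) + inverse (2^k)}" by blast
    then show "\<exists>j. I = Iv b k j" unfolding Iv_def by (intro exI[of _ j]) (simp add: field_simps)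
  qed
qed



lemma sum_lessThan_add: "(\<Sum>i<m+n. f i) = (\<Sum>i<m. f i) + (\<Sum>i<n. f (m+i))"
  for f :: "nat \<Rightarrow> 'b::comm_monoid_add"
  by (induction n) (auto simp: add.assoc)

lemma additive_iter:
  fixes f :: "nat \<Rightarrow> int \<Rightarrow> 'b::comm_monoid_add"
  assumes add: "\<And>k j. f k j = f (Suc k) (2*j) + f (Suc k) (2*j+1)"
  shows "(\<Sum>i<(2::nat)^n. f (k+n) (2^n * j + int i)) = f k j"
proof (induction n arbitrary: k j)
  case 0 then show ?case by simp
next
  case (Suc n)
  have "(\<Sum>i<(2::nat)^Suc n. f (k + Suc n) (2^Suc n * j + int i))
      = (\<Sum>i<(2::nat)^n. f (Suc k + n) (2^n * (2*j) + int i))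
        + (\<Sum>i<(2::nat)^n. f (Suc k + n) (2^n * (2*j+1) + int i))"
    by (subst mult_2[of "(2::nat)^n", unfolded power_Suc[symmetric]]) 
       (simp add: sum_lessThan_add algebra_simps)
  also have "\<dots> = f (Suc k) (2*j) + f (Suc k) (2*j+1)" using Suc.IH[of "Suc k" "2*j"] Suc.IH[of "Suc k" "2*j+1"] by simp
  finally show ?case by (metis add)
qed

locale setting =
  fixes a :: real and \<nu> :: "real measure" and g :: "real \<Rightarrow> real"
  assumes sets_nu: "sets \<nu> = sets borel"
  and fin_nu: "\<And>K. compact K \<Longrightarrow> emeasure \<nu> K < \<infinity>"
  and g_meas[measurable]: "g \<in> borel_measurable \<nu>" and g_nn: "\<And>x. g x \<ge> 0"
  and g_sq: "integrable \<nu> (\<lambda>x. (g x)^2)"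
begin

abbreviation "\<mu> \<equiv> density \<nu> (\<lambda>x. ennreal (g x))"

lemma meas_nu: "measurable \<nu> N = measurable borel N"
  by (rule measurable_cong_sets[OF sets_nu refl])

lemma g_borel[measurable]: "g \<in> borel_measurable borel"
  using g_meas unfolding measurable_cong_sets[OF sets_nu refl] .

lemma sets_mu: "sets \<mu> = sets borel"
  by (simp add: sets_nu)

lemma meas_mu: "measurable \<mu> N = measurable borel N"
  by (rule measurable_cong_sets[OF sets_mu refl])

lemma Iv_nu[measurable]: "Iv a k j \<in> sets \<nu>" by (simp add: sets_nu)

lemma nu_Iv_fin: "emeasure \<nu> (Iv a k j) < \<infinity>"
proof -
  have "emeasure \<nu> (Iv a k j) \<le> emeasure \<nu> {a + real_of_int j / 2^k .. a + (real_of_int j + 1) / 2^k}"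
    by (rule emeasure_mono[OF Iv_bounded]) (simp add: sets_nu)
  also have "\<dots> < \<infinity>" by (rule fin_nu) simp
  finally show ?thesis .
qed

lemma nn_g_sq_fin: "(\<integral>\<^sup>+x. ennreal ((g x)^2) \<partial>\<nu>) < \<infinity>"
  using g_sq by (simp add: integrable_iff_bounded)

lemma mu_eq: "A \<in> sets borel \<Longrightarrow> emeasure \<mu> A = (\<integral>\<^sup>+x. ennreal (g x) * indicator A x \<partial>\<nu>)"
  by (subst emeasure_density) (auto simp: sets_nu)

lemma mu_fin_aux: assumes A: "A \<in> sets borel" "emeasure \<nu> A < \<infinity>" shows "emeasure \<mu> A < \<infinity>"
proof -
  have "emeasure \<mu> A = (\<integral>\<^sup>+x. ennreal (g x) * indicator A x \<partial>\<nu>)" by (rule mu_eq[OF A(1)])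
  also have "\<dots> \<le> (\<integral>\<^sup>+x. indicator A x + ennreal ((g x)^2) \<partial>\<nu>)"
  proof (rule nn_integral_mono)
    fix x
    have "(g x - 1/2)^2 = (g x)^2 - g x + 1/4" by (simp add: power2_eq_square algebra_simps)
    moreover have "0 \<le> (g x - 1/2)^2" by simp
    ultimately have "g x \<le> 1 + (g x)^2" by linarith
    then have "ennreal (g x) \<le> ennreal (1 + (g x)^2)" by (rule ennreal_leI)
    then show "ennreal (g x) * indicator A x \<le> indicator A x + ennreal ((g x)^2)"
      by (cases "x \<in> A") auto
  qed
  also have "\<dots> = emeasure \<nu> A + (\<integral>\<^sup>+x. ennreal ((g x)^2) \<partial>\<nu>)"
    using A apply (subst nn_integral_add)
    apply (simp_all add: meas_nu sets_nu)
    done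
  also have "\<dots> < \<infinity>" using A nn_g_sq_fin by (simp add: ennreal_add_less_top)
  finally show ?thesis .
qed

lemma mu_Iv_fin: "emeasure \<mu> (Iv a k j) < \<infinity>"
  using mu_fin_aux[OF Iv_borel nu_Iv_fin] .

definition M :: "nat \<Rightarrow> int \<Rightarrow> real" where "M k j = measure \<mu> (Iv a k j)"
definition V :: "nat \<Rightarrow> int \<Rightarrow> real" where "V k j = measure \<nu> (Iv a k j)"

lemma M_nn: "M k j \<ge> 0" unfolding M_def by simp
lemma V_nn: "V k j \<ge> 0" unfolding V_def by simp

lemma emeasure_mu_Iv: "emeasure \<mu> (Iv a k j) = ennreal (M k j)"
  unfolding M_def using mu_Iv_fin[of k j] by (intro emeasure_eq_ennreal_measure) simp

lemma emeasure_nu_Iv: "emeasure \<nu> (Iv a k j) = ennreal (V k j)"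
  unfolding V_def using nu_Iv_fin[of k j] by (intro emeasure_eq_ennreal_measure) simp

lemma measure_add_split:
  assumes "sets N = sets borel" "emeasure N (Iv a k j) < \<infinity>"
  shows "measure N (Iv a k j) = measure N (Iv a (Suc k) (2*j)) + measure N (Iv a (Suc k) (2*j+1))"
proof -
  have fin: "emeasure N (Iv a (Suc k) i) < \<infinity>" if "i = 2*j \<or> i = 2*j+1" for i
  proof -
    have "Iv a (Suc k) i \<subseteq> Iv a k j" using that Iv_split by blast
    moreover have "Iv a k j \<in> sets N" using assms(1) Iv_borel by simp
    ultimately have "emeasure N (Iv a (Suc k) i) \<le> emeasure N (Iv a k j)"
      by (intro emeasure_mono)
    then show ?thesis using assms(2) by simp
  qed
  show ?thesis
    apply (subst Iv_split)
    apply (rule measure_Union)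
    using fin[of "2*j"] fin[of "2*j+1"] assms(1) Iv_split_disj by (auto simp: fmeasurable_def)
qed

lemma M_add: "M k j = M (Suc k) (2*j) + M (Suc k) (2*j+1)"
  unfolding M_def by (rule measure_add_split[OF sets_mu mu_Iv_fin])

lemma V_add: "V k j = V (Suc k) (2*j) + V (Suc k) (2*j+1)"
  unfolding V_def by (rule measure_add_split[OF sets_nu nu_Iv_fin])

lemma M_iter: "(\<Sum>i<(2::nat)^n. M (k+n) (2^n * j + int i)) = M k j"
  by (rule additive_iter) (rule M_add)

lemma V_iter: "(\<Sum>i<(2::nat)^n. V (k+n) (2^n * j + int i)) = V k j"
  by (rule additive_iter) (rule V_add)

lemma V0_M0: assumes "V k j = 0" shows "M k j = 0"
proof -
  have "emeasure \<nu> (Iv a k j) = 0" using assms by (simp add: emeasure_nu_Iv)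
  then have N: "Iv a k j \<in> null_sets \<nu>" by (simp add: null_sets_def sets_nu)
  have "emeasure \<mu> (Iv a k j) = 0"
    by (simp add: mu_eq nn_integral_null_set[OF N])
  then show ?thesis using M_nn[of k j] by (simp add: emeasure_mu_Iv)
qed

end


lemma sum_pow2_split:
  fixes G :: "nat \<Rightarrow> 'b::comm_monoid_add"
  shows "(\<Sum>i<(2::nat)^Suc n. G i) = (\<Sum>i<(2::nat)^n. G i) + (\<Sum>i<(2::nat)^n. G (2^n + i))"
proof -
  have "(2::nat)^Suc n = 2^n + 2^n" by simp
  then show ?thesis by (simp only: sum_lessThan_add)
qed

lemma sum_pow2_split_idx:
  fixes F :: "int \<Rightarrow> 'b::comm_monoid_add"
  shows "(\<Sum>i<(2::nat)^Suc r. F (2^Suc r * p + int i))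
       = (\<Sum>i<(2::nat)^r. F (2^r * (2*p) + int i)) + (\<Sum>i<(2::nat)^r. F (2^r * (2*p+1) + int i))"
  by (subst sum_pow2_split) (simp add: algebra_simps)

context setting begin

definition c :: "nat \<Rightarrow> int \<Rightarrow> real" where "c l p = M l p / V l p"

lemma M_cV: "M l p = c l p * V l p"
  unfolding c_def using V0_M0[of l p] by (cases "V l p = 0") auto

lemma c_nn: "c l p \<ge> 0" unfolding c_def using M_nn V_nn by simp

definition dd :: "nat \<Rightarrow> int \<Rightarrow> real" where
  "dd l p = \<bar>M (Suc l) (2*p) - c l p * V (Suc l) (2*p)\<bar> + \<bar>M (Suc l) (2*p+1) - c l p * V (Suc l) (2*p+1)\<bar>"

lemma dd_nn: "dd l p \<ge> 0" unfolding dd_def by simp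

definition Ysum :: "real \<Rightarrow> nat \<Rightarrow> int \<Rightarrow> nat \<Rightarrow> real" where
  "Ysum s l p n = (\<Sum>r<n. s / 2^r * (\<Sum>i<(2::nat)^r. dd (l+r) (2^r*p + int i)))"

lemma Ysum_Suc: "Ysum s l p (Suc n) = s * dd l p + Ysum (s/2) (Suc l) (2*p) n + Ysum (s/2) (Suc l) (2*p+1) n"
proof -
  have "Ysum s l p (Suc n) = s * dd l p + (\<Sum>r<n. s / 2^Suc r * (\<Sum>i<(2::nat)^Suc r. dd (l + Suc r) (2^Suc r*p + int i)))"
    unfolding Ysum_def by (subst sum.lessThan_Suc_shift) simp
  also have "(\<Sum>r<n. s / 2^Suc r * (\<Sum>i<(2::nat)^Suc r. dd (l + Suc r) (2^Suc r*p + int i)))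
     = Ysum (s/2) (Suc l) (2*p) n + Ysum (s/2) (Suc l) (2*p+1) n"
    unfolding Ysum_def sum.distrib[symmetric]
    by (rule sum.cong[OF refl], subst sum_pow2_split_idx) (simp add: algebra_simps)
  finally show ?thesis by simp
qed

lemma Ysum_nn: "s \<ge> 0 \<Longrightarrow> Ysum s l p n \<ge> 0"
  unfolding Ysum_def by (intro sum_nonneg mult_nonneg_nonneg sum_nonneg dd_nn) auto

lemma tree_bound:
  fixes \<psi> :: "real \<Rightarrow> real"
  assumes lip: "\<And>x y. \<bar>\<psi> x - \<psi> y\<bar> \<le> \<bar>x - y\<bar>"
  shows "s > 0 \<Longrightarrow> \<bar>\<Sum>i<(2::nat)^n. \<psi> (t + s * real i / 2^n) *
            (M (l+n) (2^n*p + int i) - c l p * V (l+n) (2^n*p + int i))\<bar> \<le> Ysum s l p n"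
proof (induction n arbitrary: l p t s)
  case 0
  then show ?case by (simp add: Ysum_def M_cV[symmetric])
next
  case (Suc n)
  let ?N = "(2::nat)^n"
  define P0 where "P0 i = t + (s/2) * real i / 2^n" for i :: nat
  define P1 where "P1 i = (t + s/2) + (s/2) * real i / 2^n" for i :: nat
  define m0 where "m0 i = M (Suc l + n) (2^n*(2*p) + int i)" for i :: nat
  define m1 where "m1 i = M (Suc l + n) (2^n*(2*p+1) + int i)" for i :: nat
  define v0 where "v0 i = V (Suc l + n) (2^n*(2*p) + int i)" for i :: nat
  define v1 where "v1 i = V (Suc l + n) (2^n*(2*p+1) + int i)" for i :: nat
  define cc where "cc = c l p"
  define c0 where "c0 = c (Suc l) (2*p)"
  define c1 where "c1 = c (Suc l) (2*p+1)"
  define B0 where "B0 = (\<Sum>i<?N. \<psi> (P0 i) * (m0 i - c0 * v0 i))"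
  define B1 where "B1 = (\<Sum>i<?N. \<psi> (P1 i) * (m1 i - c1 * v1 i))"
  define D0 where "D0 = (\<Sum>i<?N. (\<psi> (P0 i) - \<psi> t) * v0 i)"
  define D1 where "D1 = (\<Sum>i<?N. (\<psi> (P1 i) - \<psi> t) * v1 i)"
  have s2: "s/2 > 0" using Suc.prems by simp
  have IH0: "\<bar>B0\<bar> \<le> Ysum (s/2) (Suc l) (2*p) n"
    using Suc.IH[OF s2, of t "Suc l" "2*p"] unfolding B0_def P0_def m0_def v0_def c0_def by simp
  have IH1: "\<bar>B1\<bar> \<le> Ysum (s/2) (Suc l) (2*p+1) n"
    using Suc.IH[OF s2, of "t + s/2" "Suc l" "2*p+1"] unfolding B1_def P1_def m1_def v1_def c1_def by simp
  have V0: "(\<Sum>i<?N. v0 i) = V (Suc l) (2*p)" unfolding v0_def by (rule V_iter)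
  have V1: "(\<Sum>i<?N. v1 i) = V (Suc l) (2*p+1)" unfolding v1_def by (rule V_iter)
  have split: "(\<Sum>i<(2::nat)^Suc n. \<psi> (t + s * real i / 2^Suc n) *
            (M (l + Suc n) (2^Suc n*p + int i) - cc * V (l + Suc n) (2^Suc n*p + int i)))
     = (\<Sum>i<?N. \<psi> (P0 i) * (m0 i - cc * v0 i)) + (\<Sum>i<?N. \<psi> (P1 i) * (m1 i - cc * v1 i))"
  proof (subst sum_pow2_split, intro arg_cong2[where f="(+)"] sum.cong refl)
    fix i assume "i \<in> {..<?N}"
    show "\<psi> (t + s * real i / 2^Suc n) * (M (l + Suc n) (2^Suc n*p + int i) - cc * V (l + Suc n) (2^Suc n*p + int i))
       = \<psi> (P0 i) * (m0 i - cc * v0 i)"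
      unfolding P0_def m0_def v0_def by (simp add: algebra_simps)
    have e1: "t + s * real (?N + i) / 2^Suc n = P1 i" unfolding P1_def by (simp add: field_simps)
    have e2: "2^Suc n * p + int (?N + i) = 2^n*(2*p+1) + int i" by (simp add: algebra_simps)
    show "\<psi> (t + s * real (?N + i) / 2^Suc n) * (M (l + Suc n) (2^Suc n*p + int (?N + i)) - cc * V (l + Suc n) (2^Suc n*p + int (?N + i)))
       = \<psi> (P1 i) * (m1 i - cc * v1 i)"
      unfolding e1 e2 m1_def v1_def by simp
  qed
  have part0: "(\<Sum>i<?N. \<psi> (P0 i) * (m0 i - cc * v0 i)) = B0 + (c0 - cc) * D0 + (c0 - cc) * \<psi> t * V (Suc l) (2*p)"
  proof -
    have "(\<Sum>i<?N. \<psi> (P0 i) * (m0 i - cc * v0 i)) = (\<Sum>i<?N. \<psi> (P0 i) * (m0 i - c0 * v0 i) + (c0 - cc) * ((\<psi> (P0 i) - \<psi> t) * v0 i) + (c0 - cc) * \<psi> t * v0 i)"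
      by (rule sum.cong) (auto simp: algebra_simps)
    also have "\<dots> = B0 + (c0 - cc) * D0 + (c0 - cc) * \<psi> t * (\<Sum>i<?N. v0 i)"
      unfolding B0_def D0_def by (simp add: sum.distrib sum_distrib_left)
    finally show ?thesis using V0 by simp
  qed
  have part1: "(\<Sum>i<?N. \<psi> (P1 i) * (m1 i - cc * v1 i)) = B1 + (c1 - cc) * D1 + (c1 - cc) * \<psi> t * V (Suc l) (2*p+1)"
  proof -
    have "(\<Sum>i<?N. \<psi> (P1 i) * (m1 i - cc * v1 i)) = (\<Sum>i<?N. \<psi> (P1 i) * (m1 i - c1 * v1 i) + (c1 - cc) * ((\<psi> (P1 i) - \<psi> t) * v1 i) + (c1 - cc) * \<psi> t * v1 i)"
      by (rule sum.cong) (auto simp: algebra_simps)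
    also have "\<dots> = B1 + (c1 - cc) * D1 + (c1 - cc) * \<psi> t * (\<Sum>i<?N. v1 i)"
      unfolding B1_def D1_def by (simp add: sum.distrib sum_distrib_left)
    finally show ?thesis using V1 by simp
  qed
  have zero: "(c0 - cc) * V (Suc l) (2*p) + (c1 - cc) * V (Suc l) (2*p+1) = 0"
  proof -
    have "(c0 - cc) * V (Suc l) (2*p) + (c1 - cc) * V (Suc l) (2*p+1)
        = M (Suc l) (2*p) + M (Suc l) (2*p+1) - cc * (V (Suc l) (2*p) + V (Suc l) (2*p+1))"
    proof -
      have e0: "M (Suc l) (2*p) = c0 * V (Suc l) (2*p)" unfolding c0_def by (rule M_cV)
      have e1: "M (Suc l) (2*p+1) = c1 * V (Suc l) (2*p+1)" unfolding c1_def by (rule M_cV)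
      show ?thesis unfolding e0 e1 by (simp add: algebra_simps)
    qed
    also have "\<dots> = M l p - cc * V l p" using M_add[of l p] V_add[of l p] by simp
    also have "\<dots> = 0" unfolding cc_def by (simp add: M_cV[of l p])
    finally show ?thesis .
  qed
  have Dbound: "\<bar>(\<Sum>i<?N. (\<psi> (P i) - \<psi> t) * v i)\<bar> \<le> s * (\<Sum>i<?N. v i)"
    if P: "\<And>i. i < ?N \<Longrightarrow> t \<le> P i \<and> P i \<le> t + s" and v: "\<And>i. v i \<ge> 0" for P v
  proof -
    have "\<bar>(\<Sum>i<?N. (\<psi> (P i) - \<psi> t) * v i)\<bar> \<le> (\<Sum>i<?N. \<bar>(\<psi> (P i) - \<psi> t) * v i\<bar>)"
      by (rule sum_abs)
    also have "\<dots> \<le> (\<Sum>i<?N. s * v i)"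
    proof (rule sum_mono)
      fix i assume "i \<in> {..<?N}"
      then have "\<bar>\<psi> (P i) - \<psi> t\<bar> \<le> s" using lip[of "P i" t] P[of i] by auto
      then show "\<bar>(\<psi> (P i) - \<psi> t) * v i\<bar> \<le> s * v i"
        using v[of i] by (simp add: abs_mult mult_right_mono)
    qed
    finally show ?thesis by (simp add: sum_distrib_left)
  qed
  have rng0: "t \<le> P0 i \<and> P0 i \<le> t + s" if "i < ?N" for i
  proof -
    have q1: "real i / 2^n \<le> 1" using that by (simp add: field_simps)
    have q0: "real i / 2^n \<ge> 0" by simp
    have sp: "s/2 \<ge> 0" using Suc.prems by simp
    have "(s/2) * (real i / 2^n) \<le> s/2" using mult_left_le[OF q1 sp] .
    moreover have "0 \<le> (s/2) * (real i / 2^n)" using sp q0 by simp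
    ultimately show ?thesis unfolding P0_def by simp
  qed
  have rng1: "t \<le> P1 i \<and> P1 i \<le> t + s" if "i < ?N" for i
  proof -
    have q1: "real i / 2^n \<le> 1" using that by (simp add: field_simps)
    have q0: "real i / 2^n \<ge> 0" by simp
    have sp: "s/2 \<ge> 0" using Suc.prems by simp
    have "(s/2) * (real i / 2^n) \<le> s/2" using mult_left_le[OF q1 sp] .
    moreover have "0 \<le> (s/2) * (real i / 2^n)" using sp q0 by simp
    ultimately show ?thesis unfolding P1_def by simp
  qed
  have D0b: "\<bar>D0\<bar> \<le> s * V (Suc l) (2*p)"
    unfolding D0_def V0[symmetric] by (rule Dbound) (use rng0 in blast, simp add: v0_def V_nn)
  have D1b: "\<bar>D1\<bar> \<le> s * V (Suc l) (2*p+1)"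
    unfolding D1_def V1[symmetric] by (rule Dbound) (use rng1 in blast, simp add: v1_def V_nn)
  have t0: "\<bar>(c0 - cc) * D0\<bar> \<le> s * \<bar>M (Suc l) (2*p) - cc * V (Suc l) (2*p)\<bar>"
  proof -
    have "\<bar>(c0 - cc) * D0\<bar> \<le> \<bar>c0 - cc\<bar> * (s * V (Suc l) (2*p))"
      unfolding abs_mult by (rule mult_left_mono[OF D0b]) simp
    also have "\<dots> = s * \<bar>(c0 - cc) * V (Suc l) (2*p)\<bar>" using V_nn[of "Suc l" "2*p"] by (simp add: abs_mult)
    also have "(c0 - cc) * V (Suc l) (2*p) = M (Suc l) (2*p) - cc * V (Suc l) (2*p)"
      unfolding c0_def M_cV[of "Suc l" "2*p"] by (simp add: algebra_simps)
    finally show ?thesis .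
  qed
  have t1: "\<bar>(c1 - cc) * D1\<bar> \<le> s * \<bar>M (Suc l) (2*p+1) - cc * V (Suc l) (2*p+1)\<bar>"
  proof -
    have "\<bar>(c1 - cc) * D1\<bar> \<le> \<bar>c1 - cc\<bar> * (s * V (Suc l) (2*p+1))"
      unfolding abs_mult by (rule mult_left_mono[OF D1b]) simp
    also have "\<dots> = s * \<bar>(c1 - cc) * V (Suc l) (2*p+1)\<bar>" using V_nn[of "Suc l" "2*p+1"] by (simp add: abs_mult)
    also have "(c1 - cc) * V (Suc l) (2*p+1) = M (Suc l) (2*p+1) - cc * V (Suc l) (2*p+1)"
      unfolding c1_def M_cV[of "Suc l" "2*p+1"] by (simp add: algebra_simps)
    finally show ?thesis .
  qed
  have total: "(\<Sum>i<?N. \<psi> (P0 i) * (m0 i - cc * v0 i)) + (\<Sum>i<?N. \<psi> (P1 i) * (m1 i - cc * v1 i))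
      = B0 + B1 + (c0 - cc) * D0 + (c1 - cc) * D1"
  proof -
    have "(c0 - cc) * \<psi> t * V (Suc l) (2*p) + (c1 - cc) * \<psi> t * V (Suc l) (2*p+1)
        = \<psi> t * ((c0 - cc) * V (Suc l) (2*p) + (c1 - cc) * V (Suc l) (2*p+1))" by (simp add: algebra_simps)
    also have "\<dots> = 0" using zero by simp
    finally show ?thesis unfolding part0 part1 by (simp add: algebra_simps)
  qed
  have "\<bar>B0 + B1 + (c0 - cc) * D0 + (c1 - cc) * D1\<bar> \<le> \<bar>B0\<bar> + \<bar>B1\<bar> + \<bar>(c0 - cc) * D0\<bar> + \<bar>(c1 - cc) * D1\<bar>"
    by linarith
  also have "\<dots> \<le> Ysum (s/2) (Suc l) (2*p) n + Ysum (s/2) (Suc l) (2*p+1) n + s * dd l p"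
    using IH0 IH1 t0 t1 unfolding dd_def cc_def by (simp add: algebra_simps)
  also have "\<dots> = Ysum s l p (Suc n)" by (simp add: Ysum_Suc)
  finally show ?case using split total unfolding cc_def by simp
qed

end


lemma lip_abs: "1-lipschitz_on UNIV \<psi> \<Longrightarrow> \<bar>\<psi> x - \<psi> y\<bar> \<le> \<bar>x - y\<bar>"
  for \<psi> :: "real \<Rightarrow> real"
  using lipschitz_onD[of 1 UNIV \<psi> x y] by (simp add: dist_real_def)

lemma psi_bound:
  fixes \<psi> :: "real \<Rightarrow> real"
  assumes "1-lipschitz_on UNIV \<psi>" "\<forall>x. x \<notin> {0..1} \<longrightarrow> \<psi> x = 0"
  shows "\<bar>\<psi> x\<bar> \<le> 2"
proof (cases "x \<in> {0..1}")
  case True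
  have "\<psi> (-1) = 0" using assms(2) by simp
  then have "\<bar>\<psi> x\<bar> \<le> \<bar>x - (-1)\<bar>" using lip_abs[OF assms(1), of x "-1"] by simp
  then show ?thesis using True by simp
next
  case False then show ?thesis using assms(2) by simp
qed

lemma psi_borel: "1-lipschitz_on UNIV \<psi> \<Longrightarrow> \<psi> \<in> borel_measurable borel"
  for \<psi> :: "real \<Rightarrow> real"
  by (rule borel_measurable_continuous_onI, rule lipschitz_on_continuous_on)

lemma scale_density: "r \<ge> 0 \<Longrightarrow> scale_measure (ennreal r) N = density N (\<lambda>_. ennreal r)"
  by (rule measure_eqI) (auto simp: emeasure_density nn_integral_cmult_indicator)

lemma integral_scale:
  fixes f :: "'a \<Rightarrow> real"
  assumes "r \<ge> 0" shows "integral\<^sup>L (scale_measure (ennreal r) N) f = r * integral\<^sup>L N f"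
proof (cases "f \<in> borel_measurable N")
  case True
  then show ?thesis using assms by (simp add: scale_density integral_density)
next
  case False
  have "f \<notin> borel_measurable (scale_measure (ennreal r) N)"
  proof -
    have "borel_measurable (scale_measure (ennreal r) N) = borel_measurable N"
      by (rule measurable_cong_sets) simp_all
    then show ?thesis using False by blast
  qed
  then have "\<not> integrable (scale_measure (ennreal r) N) f" by auto
  moreover have "\<not> integrable N f" using False by auto
  ultimately show ?thesis by (simp add: not_integrable_integral_eq)
qed

lemma T_map_borel[measurable]: "T_map I \<in> borel_measurable borel"
  unfolding T_map_def by measurable

lemma integral_blowup:
  fixes \<rho> :: "real measure" and f :: "real \<Rightarrow> real"
  assumes sr: "sets \<rho> = sets borel" and R: "measure \<rho> I \<noteq> 0" and I: "I \<in> sets borel"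
    and f[measurable]: "f \<in> borel_measurable borel"
  shows "integral\<^sup>L (blowup \<rho> I) f = (1 / measure \<rho> I) * (\<integral>x. indicator I x * f (T_map I x) \<partial>\<rho>)"
proof -
  have meq: "measurable \<rho> N = measurable borel N" for N by (rule measurable_cong_sets[OF sr refl])
  have sp: "space \<rho> = UNIV" using sets_eq_imp_space_eq[OF sr] by simp
  have Tm: "T_map I \<in> measurable (restrict_space \<rho> I) borel"
    by (rule measurable_restrict_space1) (simp add: meq)
  have "integral\<^sup>L (blowup \<rho> I) f = (1 / measure \<rho> I) * integral\<^sup>L (distr (restrict_space \<rho> I) borel (T_map I)) f"
    unfolding blowup_def using R by (simp add: integral_scale)
  also have "integral\<^sup>L (distr (restrict_space \<rho> I) borel (T_map I)) f = integral\<^sup>L (restrict_space \<rho> I) (\<lambda>x. f (T_map I x))"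
    by (rule integral_distr[OF Tm f])
  also have "\<dots> = (\<integral>x. indicator I x * f (T_map I x) \<partial>\<rho>)"
    using I sr sp by (subst integral_restrict_space) auto
  finally show ?thesis .
qed

lemma discretize:
  fixes \<rho> :: "real measure" and \<psi> :: "real \<Rightarrow> real"
  assumes sr: "sets \<rho> = sets borel" and fin: "emeasure \<rho> (Iv a k j) < \<infinity>"
    and lipL: "1-lipschitz_on UNIV \<psi>" and bnd: "\<And>x. \<bar>\<psi> x\<bar> \<le> 2"
  shows "\<bar>(\<integral>x. indicator (Iv a k j) x * \<psi> (T_map (Iv a k j) x) \<partial>\<rho>)
           - (\<Sum>i<(2::nat)^n. \<psi> (real i / 2^n) * measure \<rho> (Iv a (k+n) (2^n*j + int i)))\<bar>
         \<le> measure \<rho> (Iv a k j) / 2^n"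
proof -
  define I where "I = Iv a k j"
  define J where "J i = Iv a (k+n) (2^n*j + int i)" for i :: nat
  define u where "u x = indicator I x * \<psi> (T_map I x)" for x
  define h where "h x = (\<Sum>i<(2::nat)^n. \<psi> (real i / 2^n) * indicator (J i) x)" for x
  have lip: "\<bar>\<psi> x - \<psi> y\<bar> \<le> \<bar>x - y\<bar>" for x y by (rule lip_abs[OF lipL])
  have psim[measurable]: "\<psi> \<in> borel_measurable borel" by (rule psi_borel[OF lipL])
  have meq: "measurable \<rho> N = measurable borel N" for N by (rule measurable_cong_sets[OF sr refl])
  have sp: "space \<rho> = UNIV" using sets_eq_imp_space_eq[OF sr] by simp
  have Isets: "I \<in> sets \<rho>" using sr by (simp add: I_def)
  have Jsets: "J i \<in> sets \<rho>" for i using sr by (simp add: J_def)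
  have JI: "J i \<subseteq> I" if "i < 2^n" for i
  proof -
    have "int i < 2^n" using that by (metis of_nat_less_iff of_nat_numeral of_nat_power)
    then show ?thesis unfolding J_def I_def by (intro Iv_desc) auto
  qed
  have Jfin: "emeasure \<rho> (J i) < \<infinity>" if "i < 2^n" for i
    using emeasure_mono[OF JI[OF that] Isets] fin unfolding I_def by simp
  have Ifin: "emeasure \<rho> I < \<infinity>" using fin by (simp add: I_def)
  have um: "u \<in> borel_measurable \<rho>" unfolding meq u_def I_def by measurable
  have int_ind: "integrable \<rho> (\<lambda>x. c * indicator I x)" for c :: real
    by (intro integrable_mult_right integrable_real_indicator Isets Ifin)
  have int_u: "integrable \<rho> u"
  proof (rule Bochner_Integration.integrable_bound[OF int_ind[of 2] um])
    show "AE x in \<rho>. norm (u x) \<le> norm (2 * indicator I x :: real)"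
      using bnd by (auto simp: u_def indicator_def)
  qed
  have int_h: "integrable \<rho> h" unfolding h_def
    by (rule Bochner_Integration.integrable_sum) (auto intro!: integrable_mult_right integrable_real_indicator Jsets Jfin)
  have pt: "\<bar>u x - h x\<bar> \<le> (1/2^n) * indicator I x" for x
  proof (cases "x \<in> I")
    case True
    define q where "q = Jx a (k+n) x"
    have jx: "j = Jx a k x" using True unfolding I_def by (simp add: mem_Iv)
    have qd: "q div 2^n = j" unfolding q_def jx by (rule Jx_div)
    have qm: "q - 2^n * j = q mod 2^n" using qd by (simp add: minus_div_mult_eq_mod[symmetric] algebra_simps)
    define i0 where "i0 = nat (q - 2^n * j)"
    have i0a: "int i0 = q - 2^n * j" unfolding i0_def qm by simp
    have i0b: "i0 < 2^n"
    proof -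
      have "q mod 2^n < 2^n" by simp
      then have "int i0 < 2^n" using i0a qm by simp
      then show ?thesis by (metis of_nat_less_iff of_nat_numeral of_nat_power)
    qed
    have memJ: "x \<in> J i \<longleftrightarrow> i = i0" for i
    proof -
      have "x \<in> J i \<longleftrightarrow> 2^n * j + int i = q" unfolding J_def q_def by (simp add: mem_Iv)
      also have "\<dots> \<longleftrightarrow> int i = int i0" using i0a by auto
      finally show ?thesis by simp
    qed
    have hx: "h x = \<psi> (real i0 / 2^n)"
    proof -
      have "h x = (\<Sum>i<(2::nat)^n. if i = i0 then \<psi> (real i / 2^n) else 0)"
        unfolding h_def by (rule sum.cong) (auto simp: memJ indicator_def)
      also have "\<dots> = \<psi> (real i0 / 2^n)" using i0b by (simp add: sum.delta)
      finally show ?thesis .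
    qed
    have fl: "real_of_int q \<le> (x - a) * 2^(k+n)" "(x - a) * 2^(k+n) < real_of_int q + 1"
      unfolding q_def Jx_def by linarith+
    have Tx: "T_map I x = (x - a) * 2^k - real_of_int j" unfolding I_def by (rule T_map_Iv)
    have e: "(x - a) * 2^(k+n) = ((x - a) * 2^k) * 2^n" by (simp add: power_add)
    have ri0: "real i0 = real_of_int q - 2^n * real_of_int j" using i0a
      by (metis of_int_diff of_int_mult of_int_numeral of_int_of_nat_eq of_int_power)
    have d1: "real i0 / 2^n \<le> T_map I x" "T_map I x < real i0 / 2^n + 1 / 2^n"
      using fl unfolding Tx ri0 e by (simp_all add: field_simps)
    have "\<bar>u x - h x\<bar> = \<bar>\<psi> (T_map I x) - \<psi> (real i0 / 2^n)\<bar>" using True by (simp add: u_def hx)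
    also have "\<dots> \<le> \<bar>T_map I x - real i0 / 2^n\<bar>" by (rule lip)
    also have "\<dots> \<le> 1/2^n" using d1 by simp
    finally show ?thesis using True by simp
  next
    case False
    then have "x \<notin> J i" if "i < 2^n" for i using JI[OF that] by blast
    then have "h x = 0" unfolding h_def by (intro sum.neutral) auto
    then show ?thesis using False by (simp add: u_def)
  qed
  have "\<bar>integral\<^sup>L \<rho> u - integral\<^sup>L \<rho> h\<bar> = \<bar>\<integral>x. u x - h x \<partial>\<rho>\<bar>"
    using int_u int_h by simp
  also have "\<dots> \<le> (\<integral>x. (1/2^n) * indicator I x \<partial>\<rho>)"
    by (rule integral_abs_bound_integral) (use int_u int_h int_ind pt in auto)
  also have "\<dots> = measure \<rho> I / 2^n" using sp by simp
  finally have main: "\<bar>integral\<^sup>L \<rho> u - integral\<^sup>L \<rho> h\<bar> \<le> measure \<rho> I / 2^n" .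
  have ih: "integral\<^sup>L \<rho> h = (\<Sum>i<(2::nat)^n. \<psi> (real i / 2^n) * measure \<rho> (J i))"
    unfolding h_def
    by (subst Bochner_Integration.integral_sum) (use Jsets Jfin sp in \<open>auto intro!: integrable_mult_right integrable_real_indicator\<close>)
  show ?thesis using main unfolding ih u_def I_def J_def .
qed



context setting begin

definition Wset :: "real set \<Rightarrow> real set" where
  "Wset I = {\<bar>(\<integral>x. \<psi> x \<partial>blowup \<mu> I) - (\<integral>x. \<psi> x \<partial>blowup \<nu> I)\<bar> | \<psi>.
       1-lipschitz_on UNIV \<psi> \<and> (\<forall>x. x \<notin> {0..1} \<longrightarrow> \<psi> x = 0)}"

lemma alpha_Wset: "alpha \<mu> \<nu> I = Sup (Wset I)"
  unfolding alpha_def W1_def Wset_def ..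

lemma zero_in_Wset: "0 \<in> Wset I"
proof -
  have "1-lipschitz_on UNIV (\<lambda>_::real. 0::real)" by (rule lipschitz_onI) auto
  then show ?thesis unfolding Wset_def by (auto intro!: exI[of _ "\<lambda>_. 0"])
qed

lemma V_pos: "M k j > 0 \<Longrightarrow> V k j > 0"
  using V_nn[of k j] V0_M0[of k j] by fastforce

lemma Wset_bound:
  assumes Mpos: "M k j > 0" and w: "w \<in> Wset (Iv a k j)"
  shows "w \<le> 2 / 2^n + Ysum 1 k j n / M k j"
proof -
  let ?I = "Iv a k j"
  have Vpos: "V k j > 0" by (rule V_pos[OF Mpos])
  obtain \<psi> where w_eq: "w = \<bar>(\<integral>x. \<psi> x \<partial>blowup \<mu> ?I) - (\<integral>x. \<psi> x \<partial>blowup \<nu> ?I)\<bar>"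
    and lipL: "1-lipschitz_on UNIV \<psi>" and z: "\<forall>x. x \<notin> {0..1} \<longrightarrow> \<psi> x = 0"
    using w unfolding Wset_def by blast
  have psim[measurable]: "\<psi> \<in> borel_measurable borel" by (rule psi_borel[OF lipL])
  have bnd: "\<bar>\<psi> x\<bar> \<le> 2" for x by (rule psi_bound[OF lipL z])
  have lip: "\<bar>\<psi> x - \<psi> y\<bar> \<le> \<bar>x - y\<bar>" for x y by (rule lip_abs[OF lipL])
  define U1 where "U1 = (\<integral>x. indicator ?I x * \<psi> (T_map ?I x) \<partial>\<mu>)"
  define U2 where "U2 = (\<integral>x. indicator ?I x * \<psi> (T_map ?I x) \<partial>\<nu>)"
  define A where "A = (\<Sum>i<(2::nat)^n. \<psi> (real i / 2^n) * M (k+n) (2^n*j + int i))"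
  define B where "B = (\<Sum>i<(2::nat)^n. \<psi> (real i / 2^n) * V (k+n) (2^n*j + int i))"
  have b1: "(\<integral>x. \<psi> x \<partial>blowup \<mu> ?I) = (1 / M k j) * U1"
    unfolding U1_def M_def using Mpos by (intro integral_blowup) (auto simp: sets_nu M_def)
  have b2: "(\<integral>x. \<psi> x \<partial>blowup \<nu> ?I) = (1 / V k j) * U2"
    unfolding U2_def V_def using Vpos by (intro integral_blowup) (auto simp: sets_nu V_def)
  have d1: "\<bar>U1 - A\<bar> \<le> M k j / 2^n"
    using discretize[OF sets_mu mu_Iv_fin[of k j] lipL bnd, of n] unfolding U1_def A_def M_def .
  have d2: "\<bar>U2 - B\<bar> \<le> V k j / 2^n"
    using discretize[OF sets_nu nu_Iv_fin[of k j] lipL bnd, of n] unfolding U2_def B_def V_def .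
  have tr: "\<bar>A - c k j * B\<bar> \<le> Ysum 1 k j n"
  proof -
    have "A - c k j * B = (\<Sum>i<(2::nat)^n. \<psi> (0 + 1 * real i / 2^n) * (M (k+n) (2^n*j + int i) - c k j * V (k+n) (2^n*j + int i)))"
      unfolding A_def B_def by (simp add: sum_distrib_left sum_subtractf[symmetric] algebra_simps)
    also have "\<bar>\<dots>\<bar> \<le> Ysum 1 k j n" by (rule tree_bound[OF lip]) simp
    finally show ?thesis .
  qed
  have ck: "c k j = M k j / V k j" by (simp add: c_def)
  have split: "(1 / M k j) * U1 - (1 / V k j) * U2 = (U1 - A) / M k j + (A - c k j * B) / M k j + (B - U2) / V k j"
    using Mpos Vpos unfolding ck by (simp add: field_simps)
  have "w = \<bar>(U1 - A) / M k j + (A - c k j * B) / M k j + (B - U2) / V k j\<bar>"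
    unfolding w_eq b1 b2 split ..
  also have "\<dots> \<le> \<bar>U1 - A\<bar> / M k j + \<bar>A - c k j * B\<bar> / M k j + \<bar>B - U2\<bar> / V k j"
  proof -
    have t3: "\<bar>p + q + r\<bar> \<le> \<bar>p\<bar> + \<bar>q\<bar> + \<bar>r\<bar>" for p q r :: real by arith
    have eM: "\<bar>x / M k j\<bar> = \<bar>x\<bar> / M k j" for x using Mpos by (simp add: abs_divide)
    have eV: "\<bar>x / V k j\<bar> = \<bar>x\<bar> / V k j" for x using Vpos by (simp add: abs_divide)
    show ?thesis using t3[of "(U1 - A) / M k j" "(A - c k j * B) / M k j" "(B - U2) / V k j"] unfolding eM eV .
  qed
  also have "\<dots> \<le> (M k j / 2^n) / M k j + Ysum 1 k j n / M k j + (V k j / 2^n) / V k j"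
    using d1 d2 tr Mpos Vpos by (intro add_mono divide_right_mono) (auto simp: abs_minus_commute)
  also have "\<dots> = 2 / 2^n + Ysum 1 k j n / M k j" using Mpos Vpos by (simp add: field_simps)
  finally show ?thesis .
qed

lemma alpha_bound:
  assumes Mpos: "M k j > 0"
  shows "alpha \<mu> \<nu> (Iv a k j) * M k j \<le> 2 * M k j / 2^n + Ysum 1 k j n"
proof -
  have "alpha \<mu> \<nu> (Iv a k j) \<le> 2 / 2^n + Ysum 1 k j n / M k j"
    unfolding alpha_Wset
    by (rule cSup_least) (use zero_in_Wset Wset_bound[OF Mpos] in auto)
  then have "alpha \<mu> \<nu> (Iv a k j) * M k j \<le> (2 / 2^n + Ysum 1 k j n / M k j) * M k j"
    using Mpos by (intro mult_right_mono) auto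
  also have "\<dots> = 2 * M k j / 2^n + Ysum 1 k j n" using Mpos by (simp add: field_simps)
  finally show ?thesis .
qed

lemma alpha_nn:
  assumes Mpos: "M k j > 0"
  shows "alpha \<mu> \<nu> (Iv a k j) \<ge> 0"
proof -
  have bdd: "bdd_above (Wset (Iv a k j))"
    using Wset_bound[OF Mpos, of _ 0] unfolding bdd_above_def by blast
  show ?thesis unfolding alpha_Wset using cSup_upper2[OF zero_in_Wset _ bdd] by simp
qed

end


lemma real_lim_le:
  fixes X Z C :: real
  assumes "C \<ge> 0" "\<And>n::nat. X \<le> Z + C / 2^n"
  shows "X \<le> Z"
proof (rule ccontr)
  assume "\<not> X \<le> Z"
  then have d: "X - Z > 0" by simp
  obtain n :: nat where n: "C / (X - Z) < 2^n" using real_arch_pow[of 2 "C / (X - Z)"] by auto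
  then have "C < (X - Z) * 2^n" using d by (simp add: field_simps)
  then have "C / 2^n < X - Z" by (simp add: field_simps)
  with assms(2)[of n] show False by simp
qed

lemma X_sq_le:
  fixes X V t :: real
  assumes X: "X \<ge> 0" and V: "V > 0" and t: "t \<ge> 0"
    and H: "\<And>l. l > 0 \<Longrightarrow> X \<le> l * V + t / (2 * l)"
  shows "X^2 \<le> 2 * V * t"
proof (cases "X = 0")
  case True then show ?thesis using V t by simp
next
  case False
  then have Xp: "X > 0" using X by simp
  have "X \<le> (X / (2*V)) * V + t / (2 * (X / (2*V)))" by (rule H) (use Xp V in simp)
  also have "(X / (2*V)) * V + t / (2 * (X / (2*V))) = X/2 + t * V / X" using Xp V by (simp add: field_simps)
  finally have h: "X \<le> X/2 + t * V / X" .
  then have "X / 2 \<le> t * V / X" by linarith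
  then have "X * X \<le> 2 * V * t" using Xp by (simp add: field_simps)
  then show ?thesis by (simp add: power2_eq_square)
qed

lemma geom_le2: "(\<Sum>r<n. 1 / (2::real)^r) \<le> 2"
proof -
  have "(\<Sum>r<n. 1 / (2::real)^r) = (\<Sum>r<n. (1/2::real)^r)" by (simp add: power_one_over)
  also have "\<dots> = (1 - (1/2)^n) / (1 - 1/2)" by (subst sum_gp_strict) simp
  also have "\<dots> \<le> 2" by simp
  finally show ?thesis .
qed

lemma abs_vdiff: "(v::real) \<ge> 0 \<Longrightarrow> \<bar>v * x - y * v\<bar> = v * \<bar>x - y\<bar>"
proof -
  assume v: "v \<ge> 0"
  have "v * x - y * v = v * (x - y)" by (simp add: algebra_simps)
  then show ?thesis using v by (simp add: abs_mult)
qed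

context setting begin

definition E :: "nat \<Rightarrow> int \<Rightarrow> real" where
  "E l p = V (Suc l) (2*p) * (c (Suc l) (2*p) - c l p)^2 + V (Suc l) (2*p+1) * (c (Suc l) (2*p+1) - c l p)^2"

lemma E_nn: "E l p \<ge> 0" unfolding E_def using V_nn by (intro add_nonneg_nonneg mult_nonneg_nonneg) auto

lemma Msq: "(M l p)^2 / V l p = (c l p)^2 * V l p"
  unfolding c_def using V0_M0[of l p] by (cases "V l p = 0") (auto simp: power2_eq_square field_simps)

lemma E_id: "E l p + (M l p)^2 / V l p = (M (Suc l) (2*p))^2 / V (Suc l) (2*p) + (M (Suc l) (2*p+1))^2 / V (Suc l) (2*p+1)"
proof -
  define V0 where "V0 = V (Suc l) (2*p)"
  define V1 where "V1 = V (Suc l) (2*p+1)"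
  define c0 where "c0 = c (Suc l) (2*p)"
  define c1 where "c1 = c (Suc l) (2*p+1)"
  define cc where "cc = c l p"
  have hV: "V l p = V0 + V1" unfolding V0_def V1_def by (rule V_add)
  have hM: "cc * V l p = c0 * V0 + c1 * V1"
    unfolding cc_def c0_def c1_def V0_def V1_def M_cV[symmetric] by (rule M_add)
  have "E l p + (M l p)^2 / V l p = V0 * (c0 - cc)^2 + V1 * (c1 - cc)^2 + cc^2 * V l p"
    unfolding E_def Msq V0_def V1_def c0_def c1_def cc_def ..
  also have "\<dots> = V0 * c0^2 + V1 * c1^2 - 2 * cc * (c0 * V0 + c1 * V1) + cc^2 * (V0 + V1) + cc^2 * V l p"
    by (simp add: power2_eq_square algebra_simps)
  also have "\<dots> = V0 * c0^2 + V1 * c1^2"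
    unfolding hM[symmetric] hV[symmetric] by (simp add: power2_eq_square algebra_simps)
  also have "\<dots> = (M (Suc l) (2*p))^2 / V (Suc l) (2*p) + (M (Suc l) (2*p+1))^2 / V (Suc l) (2*p+1)"
    unfolding Msq V0_def V1_def c0_def c1_def by (simp add: algebra_simps)
  finally show ?thesis .
qed

lemma dd_sq: "(dd l p)^2 \<le> V l p * E l p"
proof -
  define V0 where "V0 = V (Suc l) (2*p)"
  define V1 where "V1 = V (Suc l) (2*p+1)"
  define x0 where "x0 = \<bar>c (Suc l) (2*p) - c l p\<bar>"
  define x1 where "x1 = \<bar>c (Suc l) (2*p+1) - c l p\<bar>"
  have v0: "V0 \<ge> 0" and v1: "V1 \<ge> 0" unfolding V0_def V1_def by (simp_all add: V_nn)
  have e0: "\<bar>M (Suc l) (2*p) - c l p * V (Suc l) (2*p)\<bar> = V0 * x0"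
    unfolding V0_def x0_def M_cV[of "Suc l" "2*p"] using V_nn[of "Suc l" "2*p"]
    by (subst mult.commute, rule abs_vdiff)
  have e1: "\<bar>M (Suc l) (2*p+1) - c l p * V (Suc l) (2*p+1)\<bar> = V1 * x1"
    unfolding V1_def x1_def M_cV[of "Suc l" "2*p+1"] using V_nn[of "Suc l" "2*p+1"]
    by (subst mult.commute, rule abs_vdiff)
  have ddv: "dd l p = V0 * x0 + V1 * x1" unfolding dd_def e0 e1 ..
  have Ev: "E l p = V0 * x0^2 + V1 * x1^2" unfolding E_def V0_def V1_def x0_def x1_def by simp
  have Vv: "V l p = V0 + V1" unfolding V0_def V1_def by (rule V_add)
  have "(V0 + V1) * (V0 * x0^2 + V1 * x1^2) - (V0 * x0 + V1 * x1)^2 = V0 * V1 * (x0 - x1)^2"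
    by (simp add: power2_eq_square algebra_simps)
  moreover have "V0 * V1 * (x0 - x1)^2 \<ge> 0" using v0 v1 by simp
  ultimately show ?thesis unfolding ddv Ev Vv by linarith
qed

lemma dd_amgm:
  assumes l: "l > 0" shows "dd k p \<le> (l * V k p + E k p / l) / 2"
proof -
  have "(dd k p)^2 \<le> V k p * E k p" by (rule dd_sq)
  also have "\<dots> \<le> ((l * V k p + E k p / l) / 2)^2"
  proof -
    have "((l * V k p + E k p / l) / 2)^2 - V k p * E k p = ((l * V k p - E k p / l) / 2)^2"
      using l by (simp add: power2_eq_square field_simps)
    moreover have "((l * V k p - E k p / l) / 2)^2 \<ge> 0" by simp
    ultimately show ?thesis by linarith
  qed
  finally show ?thesis
    by (rule power2_le_imp_le) (use l V_nn E_nn in \<open>auto intro!: add_nonneg_nonneg mult_nonneg_nonneg divide_nonneg_nonneg\<close>)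
qed

definition Q :: "nat \<Rightarrow> nat \<Rightarrow> int \<Rightarrow> real" where
  "Q r k j = (\<Sum>i<(2::nat)^r. E (k+r) (2^r*j + int i))"

lemma Q_nn: "Q r k j \<ge> 0" unfolding Q_def by (intro sum_nonneg E_nn)

lemma Ysum_le:
  assumes l: "l > 0"
  shows "Ysum 1 k j n \<le> l * V k j + (\<Sum>r<n. Q r k j / 2^r) / (2 * l)"
proof -
  have "Ysum 1 k j n \<le> (\<Sum>r<n. 1 / 2^r * (\<Sum>i<(2::nat)^r. (l * V (k+r) (2^r*j + int i) + E (k+r) (2^r*j + int i) / l) / 2))"
    unfolding Ysum_def
    by (intro sum_mono mult_left_mono dd_amgm[OF l]) simp_all
  also have "\<dots> = (\<Sum>r<n. 1 / 2^r * ((l * V k j + Q r k j / l) / 2))"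
  proof (rule sum.cong[OF refl])
    fix r
    have "(\<Sum>i<(2::nat)^r. (l * V (k+r) (2^r*j + int i) + E (k+r) (2^r*j + int i) / l) / 2)
        = (\<Sum>i<(2::nat)^r. (l/2) * V (k+r) (2^r*j + int i) + (1/(2*l)) * E (k+r) (2^r*j + int i))"
      by (rule sum.cong) (use l in \<open>auto simp: field_simps\<close>)
    also have "\<dots> = (l/2) * (\<Sum>i<(2::nat)^r. V (k+r) (2^r*j + int i)) + (1/(2*l)) * (\<Sum>i<(2::nat)^r. E (k+r) (2^r*j + int i))"
      by (simp add: sum.distrib sum_distrib_left)
    also have "\<dots> = (l * V k j + Q r k j / l) / 2" unfolding V_iter Q_def[symmetric] using l by (simp add: field_simps)
    finally have eq: "(\<Sum>i<(2::nat)^r. (l * V (k+r) (2^r*j + int i) + E (k+r) (2^r*j + int i) / l) / 2) = (l * V k j + Q r k j / l) / 2" .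
    show "1 / 2^r * (\<Sum>i<(2::nat)^r. (l * V (k+r) (2^r*j + int i) + E (k+r) (2^r*j + int i) / l) / 2)
        = 1 / 2^r * ((l * V k j + Q r k j / l) / 2)" by (simp only: eq)
  qed
  also have "\<dots> = (\<Sum>r<n. (l * V k j / 2) * (1 / 2^r) + (1 / (2 * l)) * (Q r k j / 2^r))"
    by (rule sum.cong) (use l in \<open>auto simp: field_simps\<close>)
  also have "\<dots> = (l * V k j / 2) * (\<Sum>r<n. 1 / (2::real)^r) + (1 / (2 * l)) * (\<Sum>r<n. Q r k j / 2^r)"
    by (simp add: sum.distrib sum_distrib_left)
  also have "\<dots> \<le> (l * V k j / 2) * 2 + (1 / (2 * l)) * (\<Sum>r<n. Q r k j / 2^r)"
    using l V_nn[of k j] by (intro add_right_mono mult_left_mono geom_le2) simp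
  also have "\<dots> = l * V k j + (\<Sum>r<n. Q r k j / 2^r) / (2 * l)" by simp
  finally show ?thesis .
qed

definition Tn :: "nat \<Rightarrow> int \<Rightarrow> ennreal" where
  "Tn k j = (\<Sum>r. ennreal (Q r k j / 2^r))"

lemma alpha_sq_bound:
  "ennreal ((alpha \<mu> \<nu> (Iv a k j))^2 * (M k j)^2 / V k j) \<le> 2 * Tn k j"
proof (cases "M k j = 0")
  case True then show ?thesis by simp
next
  case False
  then have Mpos: "M k j > 0" using M_nn[of k j] by simp
  have Vpos: "V k j > 0" by (rule V_pos[OF Mpos])
  show ?thesis
  proof (cases "Tn k j = \<infinity>")
    case True then show ?thesis by simp
  next
    case False
    define t where "t = enn2real (Tn k j)"
    have t0: "t \<ge> 0" unfolding t_def by simp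
    have Tt: "Tn k j = ennreal t" unfolding t_def using False by (simp add: less_top)
    have Sn: "(\<Sum>r<n. Q r k j / 2^r) \<le> t" for n
    proof -
      have "ennreal (\<Sum>r<n. Q r k j / 2^r) = (\<Sum>r<n. ennreal (Q r k j / 2^r))"
        using Q_nn by (subst sum_ennreal[symmetric]) auto
      also have "\<dots> \<le> Tn k j" unfolding Tn_def by (rule sum_le_suminf) auto
      finally show ?thesis using Tt t0 by simp
    qed
    define X where "X = alpha \<mu> \<nu> (Iv a k j) * M k j"
    have X0: "X \<ge> 0" unfolding X_def using alpha_nn[OF Mpos] Mpos by simp
    have H: "X \<le> l * V k j + t / (2 * l)" if l: "l > 0" for l
    proof (rule real_lim_le[of "2 * M k j"])
      show "2 * M k j \<ge> 0" using Mpos by simp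
      fix n :: nat
      have "X \<le> 2 * M k j / 2^n + Ysum 1 k j n" unfolding X_def by (rule alpha_bound[OF Mpos])
      also have "\<dots> \<le> 2 * M k j / 2^n + (l * V k j + (\<Sum>r<n. Q r k j / 2^r) / (2 * l))"
        by (intro add_left_mono Ysum_le[OF l])
      also have "\<dots> \<le> 2 * M k j / 2^n + (l * V k j + t / (2 * l))"
        using l Sn[of n] by (intro add_left_mono divide_right_mono) auto
      finally show "X \<le> l * V k j + t / (2 * l) + 2 * M k j / 2^n" by simp
    qed
    have "X^2 \<le> 2 * V k j * t" by (rule X_sq_le[OF X0 Vpos t0 H])
    then have "X^2 / V k j \<le> 2 * t" using Vpos by (simp add: field_simps)
    moreover have "(alpha \<mu> \<nu> (Iv a k j))^2 * (M k j)^2 = X^2"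
      unfolding X_def by (simp add: power_mult_distrib)
    ultimately have "(alpha \<mu> \<nu> (Iv a k j))^2 * (M k j)^2 / V k j \<le> 2 * t" by simp
    then have "ennreal ((alpha \<mu> \<nu> (Iv a k j))^2 * (M k j)^2 / V k j) \<le> ennreal (2 * t)"
      by (rule ennreal_leI)
    also have "\<dots> = 2 * Tn k j" using t0 Tt by (simp add: ennreal_mult)
    finally show ?thesis .
  qed
qed

end


lemma cs_split:
  fixes f :: "int \<Rightarrow> ennreal"
  shows "(\<integral>\<^sup>+p. f (2*p) + f (2*p+1) \<partial>count_space UNIV) = (\<integral>\<^sup>+q. f q \<partial>count_space UNIV)"
proof -
  have b0: "bij_betw (\<lambda>p::int. 2*p) UNIV {q. even q}"
    by (rule bij_betwI[where g="\<lambda>q. q div 2"]) (auto elim!: evenE)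
  have b1: "bij_betw (\<lambda>p::int. 2*p+1) UNIV {q. odd q}"
    by (rule bij_betwI[where g="\<lambda>q. (q - 1) div 2"]) (auto elim!: oddE)
  have e0: "(\<integral>\<^sup>+p. f (2*p) \<partial>count_space UNIV) = (\<integral>\<^sup>+q. f q * indicator {q. even q} q \<partial>count_space UNIV)"
    by (subst nn_integral_bij_count_space[OF b0, of f]) (simp add: nn_integral_count_space_indicator)
  have e1: "(\<integral>\<^sup>+p. f (2*p+1) \<partial>count_space UNIV) = (\<integral>\<^sup>+q. f q * indicator {q. odd q} q \<partial>count_space UNIV)"
    by (subst nn_integral_bij_count_space[OF b1, of f]) (simp add: nn_integral_count_space_indicator)
  have "(\<integral>\<^sup>+p. f (2*p) + f (2*p+1) \<partial>count_space UNIV)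
      = (\<integral>\<^sup>+p. f (2*p) \<partial>count_space UNIV) + (\<integral>\<^sup>+p. f (2*p+1) \<partial>count_space UNIV)"
    by (rule nn_integral_add) auto
  also have "\<dots> = (\<integral>\<^sup>+q. f q * indicator {q. even q} q + f q * indicator {q. odd q} q \<partial>count_space UNIV)"
    unfolding e0 e1 by (rule nn_integral_add[symmetric]) auto
  also have "\<dots> = (\<integral>\<^sup>+q. f q \<partial>count_space UNIV)"
    by (rule nn_integral_cong) (auto simp: indicator_def)
  finally show ?thesis .
qed

lemma cs_iter:
  fixes f :: "int \<Rightarrow> ennreal"
  shows "(\<integral>\<^sup>+j. (\<Sum>i<(2::nat)^r. f (2^r*j + int i)) \<partial>count_space UNIV) = (\<integral>\<^sup>+q. f q \<partial>count_space UNIV)"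
proof (induction r)
  case 0 then show ?case by simp
next
  case (Suc r)
  define G where "G j = (\<Sum>i<(2::nat)^r. f (2^r*j + int i))" for j
  have "(\<integral>\<^sup>+j. (\<Sum>i<(2::nat)^Suc r. f (2^Suc r*j + int i)) \<partial>count_space UNIV)
      = (\<integral>\<^sup>+j. G (2*j) + G (2*j+1) \<partial>count_space UNIV)"
    unfolding G_def by (subst sum_pow2_split_idx) simp
  also have "\<dots> = (\<integral>\<^sup>+j. G j \<partial>count_space UNIV)" by (rule cs_split)
  also have "\<dots> = (\<integral>\<^sup>+q. f q \<partial>count_space UNIV)" unfolding G_def by (rule Suc.IH)
  finally show ?case .
qed

lemma suminf_swap_ennreal:
  fixes f :: "nat \<Rightarrow> nat \<Rightarrow> ennreal"
  shows "(\<Sum>k. \<Sum>r. f k r) = (\<Sum>r. \<Sum>k. f k r)"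
proof -
  have "(\<Sum>k. \<Sum>r. f k r) = (\<Sum>k. \<integral>\<^sup>+r. f k r \<partial>count_space UNIV)"
    by (simp add: nn_integral_count_space_nat)
  also have "\<dots> = (\<integral>\<^sup>+r. (\<Sum>k. f k r) \<partial>count_space UNIV)"
    by (rule nn_integral_suminf[symmetric]) simp
  also have "\<dots> = (\<Sum>r. \<Sum>k. f k r)" by (simp add: nn_integral_count_space_nat)
  finally show ?thesis .
qed

lemma suminf_multc_enn: "(\<Sum>k. f k) * (h::ennreal) = (\<Sum>k. f k * h)"
proof -
  have "(\<Sum>k. f k) * h = h * (\<Sum>k. f k)" by (rule mult.commute)
  also have "\<dots> = (\<Sum>k. h * f k)" by (rule ennreal_suminf_cmult[symmetric])
  also have "\<dots> = (\<Sum>k. f k * h)" by (simp only: mult.commute)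
  finally show ?thesis .
qed

lemma Jx_comp_meas[measurable]: "(\<lambda>x. \<phi> (Jx a k x)) \<in> borel_measurable borel"
  for \<phi> :: "int \<Rightarrow> 'b::topological_space"
  by (rule measurable_compose[OF measurable_Jx]) simp

lemma indicator_Iv_single: "indicator (Iv a k p) x = (indicator {Jx a k x} p :: ennreal)"
  by (auto simp: indicator_def mem_Iv)

lemma step_integral:
  fixes \<rho> :: "real measure" and f :: "real \<Rightarrow> ennreal"
  assumes sr: "sets \<rho> = sets borel" and f: "f \<in> borel_measurable borel"
  shows "(\<integral>\<^sup>+x. f x \<partial>\<rho>) = (\<integral>\<^sup>+p. (\<integral>\<^sup>+x. f x * indicator (Iv a k p) x \<partial>\<rho>) \<partial>count_space UNIV)"
proof -
  have meq: "measurable \<rho> N = measurable borel N" for N by (rule measurable_cong_sets[OF sr refl])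
  have pt: "f x = (\<integral>\<^sup>+p. f x * indicator (Iv a k p) x \<partial>count_space UNIV)" for x
  proof -
    have "(\<integral>\<^sup>+p. f x * indicator (Iv a k p) x \<partial>count_space UNIV)
        = (\<integral>\<^sup>+p. (\<lambda>_. f x) p * indicator {Jx a k x} p \<partial>count_space UNIV)"
      by (simp add: indicator_Iv_single)
    also have "\<dots> = f x" by (subst nn_integral_indicator_singleton) auto
    finally show ?thesis by simp
  qed
  have "(\<integral>\<^sup>+x. f x \<partial>\<rho>) = (\<integral>\<^sup>+x. (\<integral>\<^sup>+p. f x * indicator (Iv a k p) x \<partial>count_space UNIV) \<partial>\<rho>)"
    by (subst pt) simp
  also have "\<dots> = (\<integral>\<^sup>+p. (\<integral>\<^sup>+x. f x * indicator (Iv a k p) x \<partial>\<rho>) \<partial>count_space UNIV)"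
    by (rule nn_integral_count_space_nn_integral) (use f in \<open>auto simp: meq\<close>)
  finally show ?thesis .
qed

lemma step_fun:
  fixes \<rho> :: "real measure" and \<phi> :: "int \<Rightarrow> ennreal"
  assumes sr: "sets \<rho> = sets borel"
  shows "(\<integral>\<^sup>+x. \<phi> (Jx a k x) \<partial>\<rho>) = (\<integral>\<^sup>+p. \<phi> p * emeasure \<rho> (Iv a k p) \<partial>count_space UNIV)"
proof -
  have "(\<integral>\<^sup>+x. \<phi> (Jx a k x) \<partial>\<rho>) = (\<integral>\<^sup>+p. (\<integral>\<^sup>+x. \<phi> (Jx a k x) * indicator (Iv a k p) x \<partial>\<rho>) \<partial>count_space UNIV)"
    by (rule step_integral[OF sr]) simp
  also have "\<dots> = (\<integral>\<^sup>+p. \<phi> p * emeasure \<rho> (Iv a k p) \<partial>count_space UNIV)"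
  proof (rule nn_integral_cong)
    fix p
    have "(\<integral>\<^sup>+x. \<phi> (Jx a k x) * indicator (Iv a k p) x \<partial>\<rho>) = (\<integral>\<^sup>+x. \<phi> p * indicator (Iv a k p) x \<partial>\<rho>)"
      by (rule nn_integral_cong) (auto simp: indicator_def mem_Iv)
    also have "\<dots> = \<phi> p * emeasure \<rho> (Iv a k p)" by (rule nn_integral_cmult_indicator) (simp add: sr)
    finally show "(\<integral>\<^sup>+x. \<phi> (Jx a k x) * indicator (Iv a k p) x \<partial>\<rho>) = \<phi> p * emeasure \<rho> (Iv a k p)" .
  qed
  finally show ?thesis .
qed

context setting begin

definition Phi :: "nat \<Rightarrow> ennreal" where
  "Phi L = (\<integral>\<^sup>+p. ennreal ((M L p)^2 / V L p) \<partial>count_space UNIV)"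

definition ee :: "nat \<Rightarrow> ennreal" where
  "ee l = (\<integral>\<^sup>+p. ennreal (E l p) \<partial>count_space UNIV)"

lemma ee_Phi: "ee l + Phi l = Phi (Suc l)"
proof -
  have "ee l + Phi l = (\<integral>\<^sup>+p. ennreal (E l p) + ennreal ((M l p)^2 / V l p) \<partial>count_space UNIV)"
    unfolding ee_def Phi_def by (rule nn_integral_add[symmetric]) auto
  also have "\<dots> = (\<integral>\<^sup>+p. ennreal ((M (Suc l) (2*p))^2 / V (Suc l) (2*p)) + ennreal ((M (Suc l) (2*p+1))^2 / V (Suc l) (2*p+1)) \<partial>count_space UNIV)"
  proof (rule nn_integral_cong)
    fix p
    have "ennreal (E l p) + ennreal ((M l p)^2 / V l p) = ennreal (E l p + (M l p)^2 / V l p)"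
      using E_nn V_nn by (simp add: ennreal_plus)
    also have "\<dots> = ennreal ((M (Suc l) (2*p))^2 / V (Suc l) (2*p) + (M (Suc l) (2*p+1))^2 / V (Suc l) (2*p+1))"
      by (simp only: E_id)
    also have "\<dots> = ennreal ((M (Suc l) (2*p))^2 / V (Suc l) (2*p)) + ennreal ((M (Suc l) (2*p+1))^2 / V (Suc l) (2*p+1))"
      using V_nn by (simp add: ennreal_plus)
    finally show "ennreal (E l p) + ennreal ((M l p)^2 / V l p) = ennreal ((M (Suc l) (2*p))^2 / V (Suc l) (2*p)) + ennreal ((M (Suc l) (2*p+1))^2 / V (Suc l) (2*p+1))" .
  qed
  also have "\<dots> = Phi (Suc l)" unfolding Phi_def by (rule cs_split[where f="\<lambda>q. ennreal ((M (Suc l) q)^2 / V (Suc l) q)"])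
  finally show ?thesis .
qed

lemma sum_ee: "(\<Sum>l<L. ee l) + Phi 0 = Phi L"
proof (induction L)
  case 0 then show ?case by simp
next
  case (Suc L)
  have "(\<Sum>l<Suc L. ee l) + Phi 0 = ee L + ((\<Sum>l<L. ee l) + Phi 0)" by (simp add: algebra_simps)
  also have "\<dots> = Phi (Suc L)" using Suc.IH ee_Phi by simp
  finally show ?case .
qed

lemma g_sq_meas[measurable]: "(\<lambda>x. ennreal ((g x)^2)) \<in> borel_measurable borel" by measurable

lemma Phi_term_bound:
  "ennreal ((M L p)^2 / V L p) \<le> (\<integral>\<^sup>+x. ennreal ((g x)^2) * indicator (Iv a L p) x \<partial>\<nu>)"
proof (cases "V L p = 0")
  case True then show ?thesis by simp
next
  case False
  then have Vp: "V L p > 0" using V_nn[of L p] by simp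
  define I where "I = Iv a L p"
  define cc where "cc = M L p / V L p"
  have cc0: "cc \<ge> 0" unfolding cc_def using M_nn V_nn by simp
  define G2 where "G2 = (\<integral>\<^sup>+x. ennreal ((g x)^2) * indicator I x \<partial>\<nu>)"
  have G2fin: "G2 < \<infinity>"
  proof -
    have "G2 \<le> (\<integral>\<^sup>+x. ennreal ((g x)^2) \<partial>\<nu>)" unfolding G2_def
      by (rule nn_integral_mono) (auto simp: indicator_def)
    then show ?thesis using nn_g_sq_fin by simp
  qed
  define G2r where "G2r = enn2real G2"
  have G2e: "G2 = ennreal G2r" "G2r \<ge> 0" unfolding G2r_def using G2fin by (auto simp: less_top)
  have mI: "emeasure \<mu> I = (\<integral>\<^sup>+x. ennreal (g x) * indicator I x \<partial>\<nu>)" unfolding I_def by (rule mu_eq) simp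
  have "ennreal (2 * cc * M L p) = ennreal (2 * cc) * emeasure \<mu> I"
    unfolding I_def emeasure_mu_Iv using cc0 M_nn by (simp add: ennreal_mult)
  also have "\<dots> = (\<integral>\<^sup>+x. ennreal (2 * cc) * (ennreal (g x) * indicator I x) \<partial>\<nu>)"
    unfolding mI by (rule nn_integral_cmult[symmetric]) (simp add: meas_nu I_def)
  also have "\<dots> \<le> (\<integral>\<^sup>+x. ennreal ((g x)^2) * indicator I x + ennreal (cc^2) * indicator I x \<partial>\<nu>)"
  proof (rule nn_integral_mono)
    fix x
    have "2 * cc * g x \<le> (g x)^2 + cc^2"
    proof -
      have "0 \<le> (g x - cc)^2" by simp
      then show ?thesis by (simp add: power2_eq_square algebra_simps)
    qed
    then have le: "ennreal (2 * cc * g x) \<le> ennreal ((g x)^2 + cc^2)" by (rule ennreal_leI)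
    have l1: "ennreal (2 * cc * g x) = ennreal (2 * cc) * ennreal (g x)"
      using cc0 g_nn[of x] by (simp add: ennreal_mult)
    have l2: "ennreal ((g x)^2 + cc^2) = ennreal ((g x)^2) + ennreal (cc^2)"
      by (rule ennreal_plus) simp_all
    show "ennreal (2 * cc) * (ennreal (g x) * indicator I x) \<le> ennreal ((g x)^2) * indicator I x + ennreal (cc^2) * indicator I x"
    proof (cases "x \<in> I")
      case True then show ?thesis using le unfolding l1 l2 by simp
    next
      case False then show ?thesis by simp
    qed
  qed
  also have "\<dots> = G2 + ennreal (cc^2) * emeasure \<nu> I"
    unfolding G2_def by (subst nn_integral_add) (auto simp: meas_nu I_def nn_integral_cmult_indicator)
  also have "\<dots> = ennreal (G2r + cc^2 * V L p)"
    unfolding G2e(1) I_def emeasure_nu_Iv using G2e(2) V_nn by (simp add: ennreal_mult ennreal_plus)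
  finally have "2 * cc * M L p \<le> G2r + cc^2 * V L p"
    using G2e(2) V_nn[of L p] by (subst (asm) ennreal_le_iff) auto
  then have "(M L p)^2 / V L p \<le> G2r" unfolding cc_def using Vp by (simp add: field_simps power2_eq_square)
  then have "ennreal ((M L p)^2 / V L p) \<le> ennreal G2r" by (rule ennreal_leI)
  then show ?thesis unfolding G2e(1)[symmetric] G2_def I_def .
qed

lemma Phi_bound: "Phi L \<le> (\<integral>\<^sup>+x. ennreal ((g x)^2) \<partial>\<nu>)"
proof -
  have "Phi L \<le> (\<integral>\<^sup>+p. (\<integral>\<^sup>+x. ennreal ((g x)^2) * indicator (Iv a L p) x \<partial>\<nu>) \<partial>count_space UNIV)"
    unfolding Phi_def by (rule nn_integral_mono) (rule Phi_term_bound)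
  also have "\<dots> = (\<integral>\<^sup>+x. ennreal ((g x)^2) \<partial>\<nu>)"
    by (rule step_integral[OF sets_nu, symmetric]) simp
  finally show ?thesis .
qed

definition W :: ennreal where "W = (\<Sum>l. ee l)"

lemma W_bound: "W \<le> (\<integral>\<^sup>+x. ennreal ((g x)^2) \<partial>\<nu>)"
  unfolding W_def
proof (rule suminf_le_const)
  show "summable ee" by simp
  fix L
  have "(\<Sum>l<L. ee l) \<le> (\<Sum>l<L. ee l) + Phi 0" by simp
  also have "\<dots> = Phi L" by (rule sum_ee)
  also have "\<dots> \<le> (\<integral>\<^sup>+x. ennreal ((g x)^2) \<partial>\<nu>)" by (rule Phi_bound)
  finally show "sum ee {..<L} \<le> (\<integral>\<^sup>+x. ennreal ((g x)^2) \<partial>\<nu>)" .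
qed

lemma int_Tn: "(\<integral>\<^sup>+p. Tn k p \<partial>count_space UNIV) = (\<Sum>r. ennreal (1/2^r) * ee (k+r))"
proof -
  have "(\<integral>\<^sup>+p. Tn k p \<partial>count_space UNIV) = (\<Sum>r. \<integral>\<^sup>+p. ennreal (Q r k p / 2^r) \<partial>count_space UNIV)"
    unfolding Tn_def by (rule nn_integral_suminf) simp
  also have "\<dots> = (\<Sum>r. ennreal (1/2^r) * ee (k+r))"
  proof (rule suminf_cong)
    fix r
    have "(\<integral>\<^sup>+p. ennreal (Q r k p / 2^r) \<partial>count_space UNIV) = (\<integral>\<^sup>+p. ennreal (1/2^r) * ennreal (Q r k p) \<partial>count_space UNIV)"
    proof (rule nn_integral_cong)
      fix p
      have "ennreal (Q r k p / 2^r) = ennreal ((1/2^r) * Q r k p)" by simp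
      also have "\<dots> = ennreal (1/2^r) * ennreal (Q r k p)" by (rule ennreal_mult) (simp_all add: Q_nn)
      finally show "ennreal (Q r k p / 2^r) = ennreal (1/2^r) * ennreal (Q r k p)" .
    qed
    also have "\<dots> = ennreal (1/2^r) * (\<integral>\<^sup>+p. ennreal (Q r k p) \<partial>count_space UNIV)"
      by (rule nn_integral_cmult) simp
    also have "(\<integral>\<^sup>+p. ennreal (Q r k p) \<partial>count_space UNIV) = (\<integral>\<^sup>+p. (\<Sum>i<(2::nat)^r. ennreal (E (k+r) (2^r*p + int i))) \<partial>count_space UNIV)"
      unfolding Q_def by (intro nn_integral_cong sum_ennreal[symmetric] E_nn)
    also have "\<dots> = ee (k+r)" unfolding ee_def by (rule cs_iter)
    finally show "(\<integral>\<^sup>+p. ennreal (Q r k p / 2^r) \<partial>count_space UNIV) = ennreal (1/2^r) * ee (k+r)" .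
  qed
  finally show ?thesis .
qed

lemma geom_ennreal: "(\<Sum>r. ennreal (1/2^r)) = 2"
proof -
  have "(\<Sum>r. ennreal (1/2^r)) = (\<Sum>r. ennreal ((1/2::real)^r))" by (simp add: power_one_over)
  also have "\<dots> = ennreal (\<Sum>r. (1/2::real)^r)"
    by (rule suminf_ennreal2) (auto simp: summable_geometric)
  also have "(\<Sum>r. (1/2::real)^r) = 1 / (1 - 1/2)" by (rule suminf_geometric) simp
  finally show ?thesis by simp
qed

lemma shift_le_W: "(\<Sum>k. ee (k+r)) \<le> W"
proof -
  have "W = (\<Sum>k. ee (k+r)) + (\<Sum>k<r. ee k)" unfolding W_def by (rule suminf_offset) simp
  then show ?thesis by simp
qed

lemma sum_Tn_bound: "(\<Sum>k. \<integral>\<^sup>+p. Tn k p \<partial>count_space UNIV) \<le> 2 * W"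
proof -
  have "(\<Sum>k. \<integral>\<^sup>+p. Tn k p \<partial>count_space UNIV) = (\<Sum>k. \<Sum>r. ennreal (1/2^r) * ee (k+r))"
    by (simp add: int_Tn)
  also have "\<dots> = (\<Sum>r. \<Sum>k. ennreal (1/2^r) * ee (k+r))" by (rule suminf_swap_ennreal)
  also have "\<dots> = (\<Sum>r. ennreal (1/2^r) * (\<Sum>k. ee (k+r)))" by simp
  also have "\<dots> \<le> (\<Sum>r. ennreal (1/2^r) * W)"
    by (intro suminf_le mult_left_mono shift_le_W) auto
  also have "\<dots> = (\<Sum>r. ennreal (1/2^r)) * W" by (rule suminf_multc_enn[symmetric])
  also have "\<dots> = 2 * W" by (simp add: geom_ennreal)
  finally show ?thesis .
qed

definition Fk :: "real \<Rightarrow> ennreal" where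
  "Fk x = (\<Sum>k. ennreal ((alpha \<mu> \<nu> (Iv a k (Jx a k x)))^2))"

definition hh :: "real \<Rightarrow> ennreal" where
  "hh x = (INF k. ennreal (c k (Jx a k x)))"

lemma Fk_meas[measurable]: "Fk \<in> borel_measurable borel"
  unfolding Fk_def by measurable

lemma hh_meas[measurable]: "hh \<in> borel_measurable borel"
  unfolding hh_def by measurable

lemma int_Fk_hh: "(\<integral>\<^sup>+x. Fk x * hh x \<partial>\<mu>) \<le> 4 * (\<integral>\<^sup>+x. ennreal ((g x)^2) \<partial>\<nu>)"
proof -
  define \<phi> where "\<phi> k j = ennreal ((alpha \<mu> \<nu> (Iv a k j))^2 * c k j)" for k j
  have pt: "Fk x * hh x \<le> (\<Sum>k. \<phi> k (Jx a k x))" for x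
  proof -
    have "Fk x * hh x = (\<Sum>k. ennreal ((alpha \<mu> \<nu> (Iv a k (Jx a k x)))^2) * hh x)"
      unfolding Fk_def by (rule suminf_multc_enn)
    also have "\<dots> \<le> (\<Sum>k. \<phi> k (Jx a k x))"
    proof (rule suminf_le)
      fix k
      have "hh x \<le> ennreal (c k (Jx a k x))" unfolding hh_def by (rule INF_lower) simp
      then have "ennreal ((alpha \<mu> \<nu> (Iv a k (Jx a k x)))^2) * hh x \<le> ennreal ((alpha \<mu> \<nu> (Iv a k (Jx a k x)))^2) * ennreal (c k (Jx a k x))"
        by (rule mult_left_mono) simp
      also have "\<dots> = \<phi> k (Jx a k x)" unfolding \<phi>_def using c_nn by (simp add: ennreal_mult)
      finally show "ennreal ((alpha \<mu> \<nu> (Iv a k (Jx a k x)))^2) * hh x \<le> \<phi> k (Jx a k x)" .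
    qed auto
    finally show ?thesis .
  qed
  have "(\<integral>\<^sup>+x. Fk x * hh x \<partial>\<mu>) \<le> (\<integral>\<^sup>+x. (\<Sum>k. \<phi> k (Jx a k x)) \<partial>\<mu>)"
    by (rule nn_integral_mono) (rule pt)
  also have "\<dots> = (\<Sum>k. \<integral>\<^sup>+x. \<phi> k (Jx a k x) \<partial>\<mu>)"
    by (rule nn_integral_suminf) (simp add: meas_mu)
  also have "\<dots> = (\<Sum>k. \<integral>\<^sup>+p. \<phi> k p * emeasure \<mu> (Iv a k p) \<partial>count_space UNIV)"
    by (simp add: step_fun[OF sets_mu])
  also have "\<dots> \<le> (\<Sum>k. \<integral>\<^sup>+p. 2 * Tn k p \<partial>count_space UNIV)"
  proof (intro suminf_le nn_integral_mono)
    fix k p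
    have "\<phi> k p * emeasure \<mu> (Iv a k p) = ennreal ((alpha \<mu> \<nu> (Iv a k p))^2 * (M k p)^2 / V k p)"
      unfolding \<phi>_def emeasure_mu_Iv c_def using M_nn V_nn
      by (simp add: ennreal_mult[symmetric] power2_eq_square)
    also have "\<dots> \<le> 2 * Tn k p" by (rule alpha_sq_bound)
    finally show "\<phi> k p * emeasure \<mu> (Iv a k p) \<le> 2 * Tn k p" .
  qed auto
  also have "\<dots> = 2 * (\<Sum>k. \<integral>\<^sup>+p. Tn k p \<partial>count_space UNIV)"
    by (simp add: nn_integral_cmult)
  also have "\<dots> \<le> 2 * (2 * W)" by (intro mult_left_mono sum_Tn_bound) simp
  also have "\<dots> \<le> 2 * (2 * (\<integral>\<^sup>+x. ennreal ((g x)^2) \<partial>\<nu>))" by (intro mult_left_mono W_bound) simp_all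
  finally show ?thesis by (simp add: mult.assoc[symmetric])
qed

end


lemma enn_le_suminf: "(f::nat \<Rightarrow> ennreal) k \<le> (\<Sum>n. f n)"
proof -
  have "f k \<le> (\<Sum>n<Suc k. f n)" by (rule member_le_sum) auto
  also have "\<dots> \<le> (\<Sum>n. f n)" by (rule sum_le_suminf) auto
  finally show ?thesis .
qed

lemma Jx_anc: "k' \<le> k \<Longrightarrow> Jx a k' x = Jx a k x div 2^(k - k')"
  using Jx_div[of a k' "k - k'" x] by simp

context setting begin

definition phiq :: "int \<Rightarrow> real \<Rightarrow> nat \<Rightarrow> int \<Rightarrow> ennreal" where
  "phiq q \<delta> k j = (if j div 2^k = q \<and> c k j < \<delta> \<and> (\<forall>k'<k. \<delta> \<le> c k' (j div 2^(k - k'))) then 1 else 0)"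

definition Sq :: "int \<Rightarrow> real \<Rightarrow> real \<Rightarrow> ennreal" where
  "Sq q \<delta> x = (\<Sum>k. phiq q \<delta> k (Jx a k x))"

lemma Sq_meas[measurable]: "Sq q \<delta> \<in> borel_measurable borel"
  unfolding Sq_def by measurable

lemma phiq_x: "phiq q \<delta> k (Jx a k x) = (if Jx a 0 x = q \<and> c k (Jx a k x) < \<delta> \<and> (\<forall>k'<k. \<delta> \<le> c k' (Jx a k' x)) then 1 else 0)"
proof -
  have "Jx a k x div 2^k = Jx a 0 x" using Jx_anc[of 0 k a x] by simp
  moreover have "\<And>k'. k' < k \<Longrightarrow> Jx a k x div 2^(k - k') = Jx a k' x" by (metis Jx_anc less_imp_le)
  ultimately show ?thesis unfolding phiq_def by (smt (verit, best))
qed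

lemma Sq_le: "Sq q \<delta> x \<le> indicator (Iv a 0 q) x"
proof (cases "\<exists>k. phiq q \<delta> k (Jx a k x) = 1")
  case False
  then have "\<And>k. phiq q \<delta> k (Jx a k x) = 0" unfolding phiq_def by (auto split: if_splits)
  then show ?thesis unfolding Sq_def by simp
next
  case True
  then obtain k0 where k0: "phiq q \<delta> k0 (Jx a k0 x) = 1" by blast
  have xq: "Jx a 0 x = q" using k0 unfolding phiq_x by (auto split: if_splits)
  have z: "phiq q \<delta> k (Jx a k x) = 0" if "k \<noteq> k0" for k
  proof (rule ccontr)
    assume "phiq q \<delta> k (Jx a k x) \<noteq> 0"
    then have k1: "c k (Jx a k x) < \<delta>" "\<forall>k'<k. \<delta> \<le> c k' (Jx a k' x)" unfolding phiq_x by (auto split: if_splits)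
    have k2: "c k0 (Jx a k0 x) < \<delta>" "\<forall>k'<k0. \<delta> \<le> c k' (Jx a k' x)" using k0 unfolding phiq_x by (auto split: if_splits)
    show False
    proof (cases "k < k0")
      case True with k1 k2 show ?thesis by force
    next
      case False with that have "k0 < k" by simp
      with k1 k2 show ?thesis by force
    qed
  qed
  have "Sq q \<delta> x = (\<Sum>k\<in>{k0}. phiq q \<delta> k (Jx a k x))" unfolding Sq_def
    by (rule suminf_finite) (use z in auto)
  also have "\<dots> = 1" using k0 by simp
  finally show ?thesis using xq by (simp add: mem_Iv)
qed

lemma Sq_ge:
  assumes x: "x \<in> Iv a 0 q" and h: "hh x < ennreal \<delta>"
  shows "1 \<le> Sq q \<delta> x"
proof -
  obtain k where "ennreal (c k (Jx a k x)) < ennreal \<delta>" using h unfolding hh_def INF_less_iff by auto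
  then have "c k (Jx a k x) < \<delta>" using c_nn[of k "Jx a k x"] by (simp add: ennreal_less_iff)
  then have ex: "\<exists>k. c k (Jx a k x) < \<delta>" by blast
  define k0 where "k0 = (LEAST k. c k (Jx a k x) < \<delta>)"
  have k0: "c k0 (Jx a k0 x) < \<delta>" unfolding k0_def using LeastI_ex[OF ex] .
  have k0m: "\<forall>k'<k0. \<delta> \<le> c k' (Jx a k' x)" unfolding k0_def using not_less_Least by fastforce
  have xq: "Jx a 0 x = q" using x by (simp add: mem_Iv)
  have "phiq q \<delta> k0 (Jx a k0 x) = 1" unfolding phiq_x using xq k0 k0m by simp
  then have "1 \<le> phiq q \<delta> k0 (Jx a k0 x)" by simp
  also have "\<dots> \<le> Sq q \<delta> x" unfolding Sq_def by (rule enn_le_suminf)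
  finally show ?thesis .
qed

lemma phiq_bound: "phiq q \<delta> k j * emeasure \<mu> (Iv a k j) \<le> ennreal \<delta> * (phiq q \<delta> k j * emeasure \<nu> (Iv a k j))"
proof (cases "phiq q \<delta> k j = 0")
  case True then show ?thesis by simp
next
  case False
  then have cd: "c k j < \<delta>" unfolding phiq_def by (auto split: if_splits)
  have one: "phiq q \<delta> k j = 1" using False unfolding phiq_def by (auto split: if_splits)
  have "M k j \<le> \<delta> * V k j" using cd V_nn[of k j] unfolding M_cV[of k j] by (intro mult_right_mono) auto
  then have "ennreal (M k j) \<le> ennreal (\<delta> * V k j)" by (rule ennreal_leI)
  also have "\<dots> = ennreal \<delta> * ennreal (V k j)"
  proof (cases "\<delta> \<ge> 0")
    case True then show ?thesis using V_nn by (simp add: ennreal_mult)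
  next
    case False then show ?thesis using V_nn[of k j] by (simp add: ennreal_neg mult_nonpos_nonneg)
  qed
  finally show ?thesis unfolding one emeasure_mu_Iv emeasure_nu_Iv by simp
qed

lemma int_Sq: "(\<integral>\<^sup>+x. Sq q \<delta> x \<partial>\<mu>) \<le> ennreal \<delta> * (\<integral>\<^sup>+x. Sq q \<delta> x \<partial>\<nu>)"
proof -
  have "(\<integral>\<^sup>+x. Sq q \<delta> x \<partial>\<mu>) = (\<Sum>k. \<integral>\<^sup>+x. phiq q \<delta> k (Jx a k x) \<partial>\<mu>)"
    unfolding Sq_def by (rule nn_integral_suminf) (simp add: meas_mu)
  also have "\<dots> = (\<Sum>k. \<integral>\<^sup>+j. phiq q \<delta> k j * emeasure \<mu> (Iv a k j) \<partial>count_space UNIV)"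
    by (simp add: step_fun[OF sets_mu])
  also have "\<dots> \<le> (\<Sum>k. \<integral>\<^sup>+j. ennreal \<delta> * (phiq q \<delta> k j * emeasure \<nu> (Iv a k j)) \<partial>count_space UNIV)"
    by (intro suminf_le nn_integral_mono phiq_bound) auto
  also have "\<dots> = ennreal \<delta> * (\<Sum>k. \<integral>\<^sup>+j. phiq q \<delta> k j * emeasure \<nu> (Iv a k j) \<partial>count_space UNIV)"
    by (simp add: nn_integral_cmult)
  also have "(\<Sum>k. \<integral>\<^sup>+j. phiq q \<delta> k j * emeasure \<nu> (Iv a k j) \<partial>count_space UNIV) = (\<integral>\<^sup>+x. Sq q \<delta> x \<partial>\<nu>)"
    unfolding Sq_def by (subst nn_integral_suminf) (simp_all add: meas_nu step_fun[OF sets_nu])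
  finally show ?thesis .
qed

lemma Z_null: "{x. hh x = 0} \<inter> Iv a 0 q \<in> null_sets \<mu>"
proof -
  define Z where "Z = {x. hh x = 0} \<inter> Iv a 0 q"
  have Zm: "Z \<in> sets borel" unfolding Z_def by measurable
  have Zfin: "emeasure \<mu> Z < \<infinity>"
  proof -
    have "emeasure \<mu> Z \<le> emeasure \<mu> (Iv a 0 q)" unfolding Z_def by (rule emeasure_mono) (auto simp: sets_nu)
    then show ?thesis using mu_Iv_fin[of 0 q] by simp
  qed
  have bnd: "emeasure \<mu> Z \<le> ennreal \<delta> * ennreal (V 0 q)" if d: "\<delta> > 0" for \<delta>
  proof -
    have "emeasure \<mu> Z = (\<integral>\<^sup>+x. indicator Z x \<partial>\<mu>)" using Zm by (simp add: sets_nu)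
    also have "\<dots> \<le> (\<integral>\<^sup>+x. Sq q \<delta> x \<partial>\<mu>)"
    proof (rule nn_integral_mono)
      fix x
      show "indicator Z x \<le> Sq q \<delta> x"
      proof (cases "x \<in> Z")
        case True
        then have "x \<in> Iv a 0 q" "hh x < ennreal \<delta>" using d unfolding Z_def by auto
        then show ?thesis using True Sq_ge by simp
      next
        case False then show ?thesis by simp
      qed
    qed
    also have "\<dots> \<le> ennreal \<delta> * (\<integral>\<^sup>+x. Sq q \<delta> x \<partial>\<nu>)" by (rule int_Sq)
    also have "\<dots> \<le> ennreal \<delta> * (\<integral>\<^sup>+x. indicator (Iv a 0 q) x \<partial>\<nu>)"
      by (intro mult_left_mono nn_integral_mono Sq_le) simp
    also have "\<dots> = ennreal \<delta> * ennreal (V 0 q)" by (simp add: sets_nu emeasure_nu_Iv)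
    finally show ?thesis .
  qed
  define m where "m = enn2real (emeasure \<mu> Z)"
  have me: "emeasure \<mu> Z = ennreal m" "m \<ge> 0" unfolding m_def using Zfin by (auto simp: less_top)
  have "m = 0"
  proof (rule ccontr)
    assume "m \<noteq> 0"
    then have mp: "m > 0" using me by simp
    show False
    proof (cases "V 0 q = 0")
      case True
      have "ennreal m \<le> ennreal 1 * ennreal 0" using bnd[of 1] True me by simp
      then show False using mp by simp
    next
      case False
      then have Vp: "V 0 q > 0" using V_nn[of 0 q] by simp
      define \<delta> where "\<delta> = m / (2 * V 0 q)"
      have dp: "\<delta> > 0" unfolding \<delta>_def using mp Vp by simp
      have "ennreal m \<le> ennreal (\<delta> * V 0 q)" using bnd[OF dp] me dp V_nn[of 0 q] by (simp add: ennreal_mult)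
      then have "m \<le> \<delta> * V 0 q" using dp Vp by (subst (asm) ennreal_le_iff) auto
      also have "\<delta> * V 0 q = m / 2" unfolding \<delta>_def using Vp by simp
      finally show False using mp by simp
    qed
  qed
  then have "emeasure \<mu> Z = 0" using me by simp
  then show ?thesis unfolding Z_def[symmetric] using Zm by (simp add: null_sets_def sets_nu)
qed

lemma hh_pos_AE: "AE x in \<mu>. hh x \<noteq> 0"
proof (rule AE_I')
  show "(\<Union>q\<in>UNIV. {x. hh x = 0} \<inter> Iv a 0 q) \<in> null_sets \<mu>"
    by (rule null_sets_UN') (auto intro: Z_null)
  show "{x \<in> space \<mu>. \<not> hh x \<noteq> 0} \<subseteq> (\<Union>q\<in>UNIV. {x. hh x = 0} \<inter> Iv a 0 q)"
    using Iv_Jx by blast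
qed

lemma Fk_AE: "AE x in \<mu>. Fk x < \<infinity>"
proof -
  have fin: "(\<integral>\<^sup>+x. Fk x * hh x \<partial>\<mu>) \<noteq> \<infinity>"
  proof -
    have "(\<integral>\<^sup>+x. Fk x * hh x \<partial>\<mu>) \<le> 4 * (\<integral>\<^sup>+x. ennreal ((g x)^2) \<partial>\<nu>)" by (rule int_Fk_hh)
    also have "\<dots> < \<infinity>" using nn_g_sq_fin by (simp add: ennreal_mult_less_top)
    finally show ?thesis by simp
  qed
  have "AE x in \<mu>. Fk x * hh x \<noteq> \<infinity>"
    by (rule nn_integral_PInf_AE[OF _ fin]) (simp add: meas_mu)
  with hh_pos_AE show ?thesis
    by eventually_elim (auto simp: ennreal_mult_eq_top_iff less_top)
qed

end


lemma Iv_len: "Sup (Iv a k j) - Inf (Iv a k j) = 1 / 2^k"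
  unfolding Sup_Iv Inf_Iv by (simp add: field_simps)

lemma inj_iv: "inj (\<lambda>k. Iv a k (Jx a k x))"
proof (rule injI)
  fix k k' assume "Iv a k (Jx a k x) = Iv a k' (Jx a k' x)"
  then have "Sup (Iv a k (Jx a k x)) - Inf (Iv a k (Jx a k x)) = Sup (Iv a k' (Jx a k' x)) - Inf (Iv a k' (Jx a k' x))"
    by simp
  then have "1 / (2::real)^k = 1 / 2^k'" unfolding Iv_len .
  then have "(2::real)^k = 2^k'" by (simp add: field_simps)
  then show "k = k'" by (simp add: power_inject_exp)
qed

lemma infsum_le_Fk:
  fixes D :: "nat \<Rightarrow> real set set" and A :: "real set \<Rightarrow> real"
  assumes a: "\<forall>k. \<forall>I\<in>D k. \<exists>j. I = Iv a k j"
  shows "(\<Sum>\<^sub>\<infinity>I\<in>(\<Union>k. D k). ennreal ((A I)\<^sup>2 * indicator I x))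
         \<le> (\<Sum>k. ennreal ((A (Iv a k (Jx a k x)))^2))"
proof -
  define iv where "iv k = Iv a k (Jx a k x)" for k
  define f where "f I = ennreal ((A I)\<^sup>2 * indicator I x)" for I
  have inj: "inj iv" unfolding iv_def by (rule inj_iv)
  have "(\<Sum>\<^sub>\<infinity>I\<in>(\<Union>k. D k). f I) = (SUP F\<in>{F. finite F \<and> F \<subseteq> (\<Union>k. D k)}. sum f F)"
    by (rule nonneg_infsum_complete) simp
  also have "\<dots> \<le> (\<Sum>k. ennreal ((A (iv k))^2))"
  proof (rule SUP_least)
    fix F assume F: "F \<in> {F. finite F \<and> F \<subseteq> (\<Union>k. D k)}"
    define K where "K = iv -` F"
    have fK: "finite K" unfolding K_def using F inj by (auto intro: finite_vimageI)
    have sub: "iv ` K \<subseteq> F" unfolding K_def by auto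
    have zero: "f I = 0" if "I \<in> F - iv ` K" for I
    proof -
      from that F obtain k where Ik: "I \<in> D k" "I \<notin> iv ` K" "I \<in> F" by auto
      obtain j where Ij: "I = Iv a k j" using a Ik(1) by blast
      have "x \<notin> I"
      proof
        assume "x \<in> I"
        then have "j = Jx a k x" using Ij by (simp add: mem_Iv)
        then have "I = iv k" using Ij by (simp add: iv_def)
        then have "k \<in> K" using Ik(3) by (simp add: K_def)
        then show False using Ik(2) \<open>I = iv k\<close> by blast
      qed
      then show ?thesis by (simp add: f_def)
    qed
    have "sum f F = sum f (iv ` K)"
      by (rule sum.mono_neutral_right) (use F sub zero in auto)
    also have "\<dots> = (\<Sum>k\<in>K. f (iv k))" by (rule sum.reindex_cong[where l=iv]) (use inj in \<open>auto simp: inj_on_def\<close>)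
    also have "\<dots> = (\<Sum>k\<in>K. ennreal ((A (iv k))^2))"
      by (rule sum.cong) (auto simp: f_def iv_def Iv_Jx)
    also have "\<dots> \<le> (\<Sum>k. ennreal ((A (iv k))^2))"
    proof -
      obtain N where N: "K \<subseteq> {..<N}" using finite_nat_bounded[OF fK] by blast
      have "(\<Sum>k\<in>K. ennreal ((A (iv k))^2)) \<le> (\<Sum>k<N. ennreal ((A (iv k))^2))"
        by (rule sum_mono2) (use N in auto)
      also have "\<dots> \<le> (\<Sum>k. ennreal ((A (iv k))^2))" by (rule sum_le_suminf) auto
      finally show ?thesis .
    qed
    finally show "sum f F \<le> (\<Sum>k. ennreal ((A (iv k))^2))" .
  qed
  finally show ?thesis unfolding f_def iv_def .
qed

theorem mainTheorem12:
  fixes D :: "nat \<Rightarrow> real set set" and \<nu> :: "real measure" and g :: "real \<Rightarrow> real"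
  assumes "gen_dyadic_system D"
    and "radon_measure \<nu>"
    and "dyadically_doubling D \<nu>"
    and "g \<in> borel_measurable \<nu>" and "\<And>x. g x \<ge> 0"
    and "integrable \<nu> (\<lambda>x. (g x)\<^sup>2)"
  shows "AE x in density \<nu> (\<lambda>x. ennreal (g x)).
           (\<Sum>\<^sub>\<infinity>I\<in>(\<Union>k. D k).
              ennreal ((alpha (density \<nu> (\<lambda>x. ennreal (g x))) \<nu> I)\<^sup>2 * indicator I x)) < \<infinity>"
proof -
  obtain a where a: "\<forall>k. \<forall>I\<in>D k. \<exists>j. I = Iv a k j" using gds_structure[OF assms(1)] by blast
  have R: "sets \<nu> = sets borel" "\<And>K. compact K \<Longrightarrow> emeasure \<nu> K < \<infinity>"
    using assms(2) unfolding radon_measure_def by auto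
  interpret S: setting a \<nu> g
    by unfold_locales (use R assms(4,5,6) in auto)
  show ?thesis
    using S.Fk_AE
  proof eventually_elim
    case (elim x)
    have "(\<Sum>\<^sub>\<infinity>I\<in>(\<Union>k. D k). ennreal ((alpha (density \<nu> (\<lambda>x. ennreal (g x))) \<nu> I)\<^sup>2 * indicator I x))
        \<le> (\<Sum>k. ennreal ((alpha (density \<nu> (\<lambda>x. ennreal (g x))) \<nu> (Iv a k (Jx a k x)))^2))"
      by (rule infsum_le_Fk[OF a])
    also have "\<dots> = S.Fk x" unfolding S.Fk_def ..
    finally show ?case using elim by (rule le_less_trans)
  qed
qed


end
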